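(* Let $\omega=\frac12(-1+\sqrt3\,i)\in\mathbb{C}$. With relations ordered $\mathcal R_0,\dots,\mathcal R_5$ as in the context, and for a suitable ordering $E_0,\dots,E_5$ of the primitive idempotents (with $E_0=\frac1{|\Phi|}J$), the character tables (rows $E_i$, columns $\mathcal R_j$), followed by the multiplicities $m_i$, are as follows. For $\mathcal X(GU(2,2),\Phi(2,2))$: rows $(1,1,1,2,2,2)$, $(1,\omega,\bar\omega,2,2\bar\omega,2\omega)$, $(1,\bar\omega,\omega,2,2\omega,2\bar\omega)$, $(1,1,1,-1,-1,-1)$, $(1,\omega,\bar\omega,-1,-\bar\omega,-\omega)$, $(1,\bar\omega,\omega,-1,-\omega,-\bar\omega)$, with multiplicities $1,1,1,2,2,2$. For $\mathcal X(GU(3,2),\Phi(3,2))$: rows $(1,1,1,8,8,8)$, $(1,\omega,\bar\omega,-4,-4\bar\omega,-4\omega)$, $(1,\bar\omega,\omega,-4,-4\omega,-4\bar\omega)$, $(1,1,1,-1,-1,-1)$, $(1,\omega,\bar\omega,2,2\bar\omega,2\omega)$, $(1,\bar\omega,\omega,2,2\omega,2\bar\omega)$, with multiplicities $1,3,3,8,6,6$.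
   Context: Let $\Phi=\Phi(n,2)=\{x\in\mathbb{F}_4^n\setminus\{0\}:\langle x,x\rangle=0\}$ with $\langle x,y\rangle=\sum_k x_ky_k^{2}$, and let $\mathcal X(GU(n,2),\Phi(n,2))$ be the association scheme of orbitals of $GU(n,2)$ acting on $\Phi$ by $x\mapsto xU$. Fix a primitive element $\alpha$ of $\mathbb{F}_4$. For $n\in\{2,3\}$ the relations are $\mathcal R_l=\{(x,y):y=\alpha^lx\}$ for $l=0,1,2$ and $\mathcal R_l=\{(x,y):\langle x,y\rangle=\alpha^{l}\}$ for $l=3,4,5$. For a commutative association scheme with adjacency matrices $A_0,\dots,A_d$ and primitive idempotents $E_0,\dots,E_d$ of its Bose–Mesner algebra, the character table (first eigenmatrix) is $P=[p_j(i)]$ where $A_j=\sum_i p_j(i)E_i$; the multiplicity $m_i$ is the rank of $E_i$. *)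

theory Defs
  imports "Jordan_Normal_Form.DL_Rank"
begin

datatype F4 = F0 | F1 | Fa | Fb   (* 0, 1, alpha, alpha^2 ; alpha a fixed primitive element *)

fun f4_add :: "F4 \<Rightarrow> F4 \<Rightarrow> F4" where
  "f4_add F0 y = y"
| "f4_add x F0 = x"
| "f4_add F1 F1 = F0" | "f4_add F1 Fa = Fb" | "f4_add F1 Fb = Fa"
| "f4_add Fa F1 = Fb" | "f4_add Fa Fa = F0" | "f4_add Fa Fb = F1"
| "f4_add Fb F1 = Fa" | "f4_add Fb Fa = F1" | "f4_add Fb Fb = F0"

fun f4_mul :: "F4 \<Rightarrow> F4 \<Rightarrow> F4" where
  "f4_mul F0 y = F0"
| "f4_mul x F0 = F0"
| "f4_mul F1 y = y"
| "f4_mul x F1 = x"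
| "f4_mul Fa Fa = Fb" | "f4_mul Fa Fb = F1"
| "f4_mul Fb Fa = F1" | "f4_mul Fb Fb = Fa"

definition f4_sq :: "F4 \<Rightarrow> F4" where
  "f4_sq x = f4_mul x x"

definition alpha_pow :: "nat \<Rightarrow> F4" where
  "alpha_pow l = (if l mod 3 = 0 then F1 else if l mod 3 = 1 then Fa else Fb)"

definition herm :: "F4 list \<Rightarrow> F4 list \<Rightarrow> F4" where
  "herm x y = foldr f4_add (map2 (\<lambda>a b. f4_mul a (f4_sq b)) x y) F0"

definition vscale :: "F4 \<Rightarrow> F4 list \<Rightarrow> F4 list" where
  "vscale c x = map (f4_mul c) x"

definition phi_list :: "nat \<Rightarrow> F4 list list" where
  "phi_list n = filter (\<lambda>x. x \<noteq> replicate n F0 \<and> herm x x = F0) (List.n_lists n [F0, F1, Fa, Fb])"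

definition Phi :: "nat \<Rightarrow> F4 list set" where
  "Phi n = {x. length x = n \<and> x \<noteq> replicate n F0 \<and> herm x x = F0}"

abbreviation NPhi :: "nat \<Rightarrow> nat" where
  "NPhi n \<equiv> length (phi_list n)"

section \<open>Relations R_0..R_5 (valid for n in {2,3}) and adjacency matrices\<close>

definition rel :: "nat \<Rightarrow> F4 list \<Rightarrow> F4 list \<Rightarrow> bool" where
  "rel l x y = (if l < 3 then y = vscale (alpha_pow l) x else herm x y = alpha_pow l)"

definition adj :: "nat \<Rightarrow> nat \<Rightarrow> complex mat" where
  "adj n l = mat (NPhi n) (NPhi n)
     (\<lambda>(a, b). if rel l (phi_list n ! a) (phi_list n ! b) then 1 else 0)"

definition bm_algebra :: "nat \<Rightarrow> complex mat set" where
  "bm_algebra n = {mat (NPhi n) (NPhi n) (\<lambda>(a, b). \<Sum>j<6. c j * adj n j $$ (a, b)) | c. True}"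

definition prim_idem :: "nat \<Rightarrow> complex mat \<Rightarrow> bool" where
  "prim_idem n E \<longleftrightarrow> E \<in> bm_algebra n \<and> E * E = E \<and> E \<noteq> 0\<^sub>m (NPhi n) (NPhi n) \<and>
     (\<forall>F \<in> bm_algebra n. F * F = F \<longrightarrow> E * F = 0\<^sub>m (NPhi n) (NPhi n) \<or> E * F = E)"

definition char_table :: "nat \<Rightarrow> complex list list \<Rightarrow> nat list \<Rightarrow> bool" where
  "char_table n P m \<longleftrightarrow> (\<exists>E :: nat \<Rightarrow> complex mat.
     (\<forall>i<6. prim_idem n (E i)) \<and> inj_on E {..<6} \<and>
     (\<forall>F. prim_idem n F \<longrightarrow> (\<exists>i<6. F = E i)) \<and>
     E 0 = mat (NPhi n) (NPhi n) (\<lambda>_. 1 / of_nat (NPhi n)) \<and>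
     (\<forall>j<6. \<forall>a<NPhi n. \<forall>b<NPhi n. adj n j $$ (a, b) = (\<Sum>i<6. P ! i ! j * E i $$ (a, b))) \<and>
     (\<forall>i<6. vec_space.rank (NPhi n) (E i) = m ! i))"

definition omega :: complex where
  "omega = (-1 + of_real (sqrt 3) * \<i>) / 2"

end

theory Submission
  imports Defs
begin


lemma (in vec_space) rank_mult_le:
  assumes A: "A \<in> carrier_mat n k" and B: "B \<in> carrier_mat k nc"
  shows "rank (A * B) \<le> rank A"
proof -
  have AB: "A * B \<in> carrier_mat n nc" using A B by auto
  have colsA: "set (cols A) \<subseteq> carrier_vec n" using A cols_dim by blast
  have sub: "set (cols (A * B)) \<subseteq> span (set (cols A))"
  proof
    fix x assume "x \<in> set (cols (A * B))"
    then obtain j where j: "j < nc" "x = col (A * B) j"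
      using AB by (metis cols_length cols_nth carrier_matD(2) in_set_conv_nth)
    have "x = A *\<^sub>v col B j" using j A B by auto
    moreover have "col B j \<in> carrier_vec k" using B by auto
    ultimately have "x \<in> col_space A" using col_space_eq[OF A] A by auto
    then show "x \<in> span (set (cols A))" unfolding col_space_def .
  qed
  have s1: "span (set (cols (A * B))) \<subseteq> span (set (cols A))"
    using span_subsetI[OF colsA sub] .
  have "subspace class_ring (span (set (cols A))) V"
    using colsA span_is_subspace by auto
  moreover have "subspace class_ring (span (set (cols (A * B)))) V"
    using AB cols_dim span_is_subspace by (metis carrier_matD(1))
  ultimately have subspace: "subspace class_ring (span (set (cols (A * B)))) (vs (span (set (cols A))))"
    using nested_subspaces s1 by blast
  have fdA: "vectorspace.fin_dim class_ring (vs (span (set (cols A))))"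
    using A fin_dim_span_cols by blast
  have fdAB: "vectorspace.fin_dim class_ring (span_vs (set (cols (A * B))))"
    using AB fin_dim_span_cols by blast
  have vsA: "vectorspace class_ring (vs (span (set (cols A))))"
    using \<open>subspace class_ring (span (set (cols A))) V\<close> subspace_is_vs by blast
  show ?thesis unfolding rank_def
    using vectorspace.subspace_dim[OF vsA subspace fdA] fdAB by auto
qed




lemma regroup:
  fixes c d :: "nat \<Rightarrow> complex"
  assumes "finite Z" "\<And>z. z \<in> Z \<Longrightarrow> ta z < 6" "\<And>z. z \<in> Z \<Longrightarrow> tb z < 6"
  shows "(\<Sum>z\<in>Z. c (ta z) * d (tb z)) =
    (\<Sum>i<6. \<Sum>j<6. c i * d j * of_nat (card {z\<in>Z. ta z = i \<and> tb z = j}))"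
proof -
  have "(\<Sum>i<6. \<Sum>j<6. c i * d j * of_nat (card {z\<in>Z. ta z = i \<and> tb z = j}))
     = (\<Sum>i<(6::nat). \<Sum>j<(6::nat). \<Sum>z\<in>Z. if ta z = i \<and> tb z = j then c i * d j else 0)"
    using assms(1) by (simp add: sum.inter_filter[symmetric] mult.commute)
  also have "\<dots> = (\<Sum>z\<in>Z. \<Sum>i<(6::nat). \<Sum>j<(6::nat). if ta z = i \<and> tb z = j then c i * d j else 0)"
    by (simp add: sum.swap[of _ Z])
  also have "\<dots> = (\<Sum>z\<in>Z. c (ta z) * d (tb z))"
  proof (rule sum.cong[OF refl])
    fix z assume z: "z \<in> Z"
    have "(\<Sum>i<(6::nat). \<Sum>j<(6::nat). if ta z = i \<and> tb z = j then c i * d j else 0)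
        = (\<Sum>i<(6::nat). if ta z = i then c i * d (tb z) else 0)"
      using assms(3)[OF z] by (intro sum.cong refl) (auto simp: if_distrib sum.delta)
    also have "\<dots> = c (ta z) * d (tb z)" using assms(2)[OF z] by (simp add: sum.delta)
    finally show "(\<Sum>i<(6::nat). \<Sum>j<(6::nat). if ta z = i \<and> tb z = j then c i * d j else 0) = c (ta z) * d (tb z)" .
  qed
  finally show ?thesis by simp
qed

lemma sum6: "(\<Sum>i<(6::nat). g i) = g 0 + g 1 + g 2 + g 3 + g 4 + (g 5 :: 'a :: comm_monoid_add)"
  by (simp add: eval_nat_numeral add_ac)

locale cdata =
  fixes n N :: nat and tt :: "nat \<Rightarrow> nat \<Rightarrow> nat" and pc :: "nat \<Rightarrow> nat \<Rightarrow> nat \<Rightarrow> nat"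
    and P :: "complex list list" and m :: "nat list" and e :: "nat \<Rightarrow> nat \<Rightarrow> complex"
    and K :: "nat \<Rightarrow> nat list" and R :: "nat \<Rightarrow> nat \<Rightarrow> nat \<Rightarrow> complex"
  assumes N: "NPhi n = N"
  and tt_lt: "\<And>a b. a<N \<Longrightarrow> b<N \<Longrightarrow> tt a b < 6"
  and rel_tt: "\<And>a b l. a<N \<Longrightarrow> b<N \<Longrightarrow> l<6 \<Longrightarrow> rel l (phi_list n ! a) (phi_list n ! b) = (tt a b = l)"
  and tt_diag: "\<And>a b. a<N \<Longrightarrow> b<N \<Longrightarrow> (tt a b = 0) = (a = b)"
  and cnt: "\<And>a b i j. a<N \<Longrightarrow> b<N \<Longrightarrow> i<6 \<Longrightarrow> j<6 \<Longrightarrow> card {z. z<N \<and> tt a z = i \<and> tt z b = j} = pc i j (tt a b)"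
  and pc_sym: "\<And>i j k. i<6 \<Longrightarrow> j<6 \<Longrightarrow> k<6 \<Longrightarrow> pc i j k = pc j i k"
  and wit: "\<And>k. k<6 \<Longrightarrow> \<exists>b<N. tt 0 b = k"
  and Npos: "0 < N"
  and A4: "\<And>i b k. i<6 \<Longrightarrow> b<6 \<Longrightarrow> k<6 \<Longrightarrow> (\<Sum>a<6. e i a * of_nat (pc a b k)) = P!i!b * e i k"
  and A5: "\<And>i j. i<6 \<Longrightarrow> j<6 \<Longrightarrow> (\<Sum>b<6. P!i!b * e j b) = (if i=j then 1 else 0)"
  and A6: "\<And>j k. j<6 \<Longrightarrow> k<6 \<Longrightarrow> (\<Sum>i<6. P!i!j * e i k) = (if j=k then 1 else 0)"
  and A7: "\<And>k. k<6 \<Longrightarrow> e 0 k = 1 / of_nat N"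
  and A8: "\<And>i. i<6 \<Longrightarrow> e i 0 \<noteq> 0"
  and P0: "\<And>i. i<6 \<Longrightarrow> P!i!0 = 1"
  and Klt: "\<And>i k. i<6 \<Longrightarrow> k < m!i \<Longrightarrow> K i ! k < N"
  and fact: "\<And>i a b. i<6 \<Longrightarrow> a<N \<Longrightarrow> b<N \<Longrightarrow> (\<Sum>k<m!i. e i (tt a (K i!k)) * R i k b) = e i (tt a b)"
  and msum: "(\<Sum>i<6. m!i) = N"
begin

definition Mc :: "(nat \<Rightarrow> complex) \<Rightarrow> complex mat" where
  "Mc c = mat N N (\<lambda>(a,b). c (tt a b))"

definition cp :: "(nat \<Rightarrow> complex) \<Rightarrow> (nat \<Rightarrow> complex) \<Rightarrow> nat \<Rightarrow> complex" where
  "cp c d k = (\<Sum>i<6. \<Sum>j<6. c i * d j * of_nat (pc i j k))"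

definition fh :: "nat \<Rightarrow> (nat \<Rightarrow> complex) \<Rightarrow> complex" where
  "fh i f = (\<Sum>b<6. P!i!b * f b)"

lemma Mc_carrier[simp]: "Mc c \<in> carrier_mat N N" by (simp add: Mc_def)
lemma Mc_index[simp]: "a < N \<Longrightarrow> b < N \<Longrightarrow> Mc c $$ (a,b) = c (tt a b)" by (simp add: Mc_def)
lemma Mc_dim[simp]: "dim_row (Mc c) = N" "dim_col (Mc c) = N" by (simp_all add: Mc_def)

lemma Mc_eq_iff: "Mc c = Mc d \<longleftrightarrow> (\<forall>k<6. c k = d k)"
proof
  assume h: "Mc c = Mc d"
  show "\<forall>k<6. c k = d k"
  proof (intro allI impI)
    fix k :: nat assume k: "k < 6"
    obtain b where b: "b < N" "tt 0 b = k" using wit[OF k] by blast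
    have "Mc c $$ (0,b) = Mc d $$ (0,b)" using h by simp
    then show "c k = d k" using b Npos by simp
  qed
next
  assume "\<forall>k<6. c k = d k"
  then show "Mc c = Mc d" by (intro eq_matI) (auto simp: tt_lt)
qed

lemma Mc_zero: "Mc (\<lambda>_. 0) = 0\<^sub>m N N" by (intro eq_matI) auto

lemma Mc_ne0: "c 0 \<noteq> 0 \<Longrightarrow> Mc c \<noteq> 0\<^sub>m N N"
proof
  assume c: "c 0 \<noteq> 0" and h: "Mc c = 0\<^sub>m N N"
  have "Mc c $$ (0,0) = 0" using h Npos by simp
  then show False using c Npos tt_diag[of 0 0] by simp
qed

lemma adj_index: "l < 6 \<Longrightarrow> a < N \<Longrightarrow> b < N \<Longrightarrow> adj n l $$ (a,b) = (if tt a b = l then 1 else 0)"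
  by (simp add: adj_def N rel_tt)

lemma adj_Mc: "l < 6 \<Longrightarrow> adj n l = Mc (\<lambda>k. if k = l then 1 else 0)"
proof -
  assume l: "l < 6"
  have d: "dim_row (adj n l) = N" "dim_col (adj n l) = N" by (simp_all add: adj_def N)
  show ?thesis by (rule eq_matI) (simp_all add: d adj_index l)
qed

lemma bm_iff: "X \<in> bm_algebra n \<longleftrightarrow> (\<exists>c. X = Mc c)"
proof -
  have key: "mat (NPhi n) (NPhi n) (\<lambda>(a, b). \<Sum>j<6. c j * adj n j $$ (a, b)) = Mc c" for c
  proof (intro eq_matI)
    fix a b assume "a < dim_row (Mc c)" "b < dim_col (Mc c)"
    then have ab: "a < N" "b < N" by auto
    have "(\<Sum>j<6. c j * adj n j $$ (a, b)) = (\<Sum>j<6. if tt a b = j then c j else 0)"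
      using ab by (intro sum.cong refl) (simp add: adj_index)
    also have "\<dots> = c (tt a b)" using tt_lt[OF ab] by (simp add: sum.delta)
    finally show "mat (NPhi n) (NPhi n) (\<lambda>(a, b). \<Sum>j<6. c j * adj n j $$ (a, b)) $$ (a, b) = Mc c $$ (a, b)"
      using ab by (simp add: N)
  qed (auto simp: N)
  show ?thesis unfolding bm_algebra_def using key by auto
qed

lemma Mc_mult: "Mc c * Mc d = Mc (cp c d)"
proof (intro eq_matI)
  fix a b assume "a < dim_row (Mc (cp c d))" "b < dim_col (Mc (cp c d))"
  then have ab: "a < N" "b < N" by auto
  have "(Mc c * Mc d) $$ (a,b) = (\<Sum>z<N. c (tt a z) * d (tt z b))"
    using ab by (simp add: scalar_prod_def atLeast0LessThan)
  also have "\<dots> = (\<Sum>i<6. \<Sum>j<6. c i * d j * of_nat (card {z\<in>{..<N}. tt a z = i \<and> tt z b = j}))"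
    by (rule regroup) (auto simp: tt_lt ab)
  also have "\<dots> = cp c d (tt a b)"
    unfolding cp_def using ab by (intro sum.cong refl) (simp add: cnt[symmetric])
  finally show "(Mc c * Mc d) $$ (a,b) = Mc (cp c d) $$ (a,b)" using ab by simp
qed auto

lemma cp_eig: assumes i: "i < 6" and k: "k < 6"
  shows "cp (\<lambda>k. s * e i k) f k = s * fh i f * e i k"
proof -
  have "cp (\<lambda>k. s * e i k) f k = (\<Sum>a<6. \<Sum>b<6. s * f b * (e i a * of_nat (pc a b k)))"
    unfolding cp_def by (simp add: mult_ac)
  also have "\<dots> = (\<Sum>b<6. \<Sum>a<6. s * f b * (e i a * of_nat (pc a b k)))"
    by (rule sum.swap)
  also have "\<dots> = (\<Sum>b<6. s * f b * (\<Sum>a<6. e i a * of_nat (pc a b k)))"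
    by (simp add: sum_distrib_left)
  also have "\<dots> = (\<Sum>b<6. s * f b * (P!i!b * e i k))"
    using i k by (intro sum.cong refl) (simp add: A4)
  also have "\<dots> = s * fh i f * e i k"
    unfolding fh_def by (simp add: sum_distrib_left sum_distrib_right mult_ac)
  finally show ?thesis .
qed

lemma cp_eig': assumes i: "i < 6" and k: "k < 6"
  shows "cp f (\<lambda>k. s * e i k) k = s * fh i f * e i k"
proof -
  have "cp f (\<lambda>k. s * e i k) k = cp (\<lambda>k. s * e i k) f k"
    unfolding cp_def
    apply (subst sum.swap)
    using k by (intro sum.cong refl) (simp add: pc_sym mult_ac)
  then show ?thesis using cp_eig[OF i k] by simp
qed

lemma Mc_eig: "i < 6 \<Longrightarrow> Mc (\<lambda>k. s * e i k) * Mc f = Mc (\<lambda>k. s * fh i f * e i k)"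
  by (simp add: Mc_mult Mc_eq_iff cp_eig)

lemma Mc_eig': "i < 6 \<Longrightarrow> Mc f * Mc (\<lambda>k. s * e i k) = Mc (\<lambda>k. s * fh i f * e i k)"
  by (simp add: Mc_mult Mc_eq_iff cp_eig')

lemma e1: "(\<lambda>k. 1 * e i k) = e i" by simp

lemma fh_e: "i < 6 \<Longrightarrow> j < 6 \<Longrightarrow> fh i (e j) = (if i = j then 1 else 0)"
  by (simp add: fh_def A5)

lemma decomp: "k < 6 \<Longrightarrow> (\<Sum>i<6. fh i f * e i k) = f k"
proof -
  assume k: "k < 6"
  have "(\<Sum>i<6. fh i f * e i k) = (\<Sum>i<6. \<Sum>j<6. f j * (P!i!j * e i k))"
    unfolding fh_def by (simp add: sum_distrib_right sum_distrib_left mult_ac)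
  also have "\<dots> = (\<Sum>j<6. f j * (\<Sum>i<6. P!i!j * e i k))"
    by (subst sum.swap) (simp add: sum_distrib_left)
  also have "\<dots> = (\<Sum>j<6. if j = k then f j else 0)"
    using k by (intro sum.cong refl) (simp add: A6)
  also have "\<dots> = f k" using k by (simp add: sum.delta)
  finally show ?thesis .
qed

definition EE :: "nat \<Rightarrow> complex mat" where "EE i = Mc (e i)"

lemma EE_idem: "i < 6 \<Longrightarrow> EE i * EE i = EE i"
  using Mc_eig[of i 1 "e i"] by (simp add: EE_def fh_e)

lemma EE_bm: "EE i \<in> bm_algebra n" by (auto simp: bm_iff EE_def)

lemma EE_ne0: "i < 6 \<Longrightarrow> EE i \<noteq> 0\<^sub>m N N" by (simp add: EE_def Mc_ne0 A8)

lemma EE_prim: assumes i: "i < 6" shows "prim_idem n (EE i)"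
  unfolding prim_idem_def
proof (intro conjI ballI impI)
  show "EE i \<in> bm_algebra n" by (rule EE_bm)
  show "EE i * EE i = EE i" using i by (rule EE_idem)
  show "EE i \<noteq> 0\<^sub>m (NPhi n) (NPhi n)" using EE_ne0[OF i] N by simp
  fix F assume F: "F \<in> bm_algebra n" and FF: "F * F = F"
  obtain f where f: "F = Mc f" using F bm_iff by blast
  let ?h = "fh i f"
  have EF: "EE i * F = Mc (\<lambda>k. ?h * e i k)"
    using Mc_eig[OF i, of 1 f] by (simp add: EE_def f)
  have "EE i * (F * F) = (EE i * F) * F"
    by (simp add: f EE_def assoc_mult_mat[of _ N N _ N _ N])
  also have "\<dots> = Mc (\<lambda>k. ?h * ?h * e i k)"
    using Mc_eig[OF i, of ?h f] EF f by simp
  finally have "Mc (\<lambda>k. ?h * e i k) = Mc (\<lambda>k. ?h * ?h * e i k)" using FF EF by simp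
  then have "?h * e i 0 = ?h * ?h * e i 0" by (simp add: Mc_eq_iff)
  then have "?h = 0 \<or> ?h = 1" using A8[OF i] by (auto simp: algebra_simps)
  then show "EE i * F = 0\<^sub>m (NPhi n) (NPhi n) \<or> EE i * F = EE i"
  proof
    assume "?h = 0" then show ?thesis using EF Mc_zero N by simp
  next
    assume "?h = 1" then show ?thesis using EF by (simp add: EE_def)
  qed
qed

lemma EE_inj: "inj_on EE {..<6}"
proof (rule inj_onI)
  fix i j assume i: "i \<in> {..<6::nat}" and j: "j \<in> {..<6::nat}" and h: "EE i = EE j"
  then have "\<forall>k<6. e i k = e j k" by (simp add: EE_def Mc_eq_iff)
  then have "fh i (e i) = fh i (e j)" by (simp add: fh_def)
  then show "i = j" using i j fh_e by (auto split: if_splits)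
qed

lemma EE_complete: assumes F: "prim_idem n F" shows "\<exists>i<6. F = EE i"
proof -
  have Fbm: "F \<in> bm_algebra n" and FF: "F * F = F" and F0: "F \<noteq> 0\<^sub>m N N"
    and Fprim: "\<And>G. G \<in> bm_algebra n \<Longrightarrow> G * G = G \<Longrightarrow> F * G = 0\<^sub>m N N \<or> F * G = F"
    using F N by (auto simp: prim_idem_def)
  obtain f where f: "F = Mc f" using Fbm bm_iff by blast
  have "\<exists>i<6. fh i f \<noteq> 0"
  proof (rule ccontr)
    assume "\<not> (\<exists>i<6. fh i f \<noteq> 0)"
    then have "\<forall>k<6. f k = 0" using decomp by (metis (no_types, lifting) lessThan_iff mult_zero_left sum.neutral)
    then have "F = Mc (\<lambda>_. 0)" using f by (simp add: Mc_eq_iff)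
    then show False using F0 Mc_zero by simp
  qed
  then obtain i where i: "i < 6" and h0: "fh i f \<noteq> 0" by blast
  let ?h = "fh i f"
  have FE: "F * EE i = Mc (\<lambda>k. ?h * e i k)"
    using Mc_eig'[OF i, of f 1] by (simp add: EE_def f)
  have "F * EE i \<noteq> 0\<^sub>m N N" unfolding FE by (rule Mc_ne0) (simp add: h0 A8[OF i])
  then have "F * EE i = F" using Fprim[OF EE_bm EE_idem[OF i]] by blast
  then have F2: "F = Mc (\<lambda>k. ?h * e i k)" using FE by simp
  have "F * F = Mc (\<lambda>k. ?h * ?h * e i k)"
    using Mc_eig[OF i, of ?h f] F2 f by (metis)
  then have "Mc (\<lambda>k. ?h * e i k) = Mc (\<lambda>k. ?h * ?h * e i k)" using FF F2 by simp
  then have "?h * e i 0 = ?h * ?h * e i 0" by (simp add: Mc_eq_iff)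
  then have "?h = 1" using A8[OF i] h0 by (auto simp: algebra_simps)
  then have "F = EE i" using F2 by (simp add: EE_def)
  then show ?thesis using i by blast
qed


definition XX :: "nat \<Rightarrow> complex mat" where
  "XX i = mat N (m!i) (\<lambda>(a,k). e i (tt a (K i ! k)))"
definition YY :: "nat \<Rightarrow> complex mat" where
  "YY i = mat (m!i) N (\<lambda>(k,b). R i k b)"

lemma EE_fact: assumes i: "i < 6" shows "EE i = XX i * YY i"
proof (rule eq_matI)
  fix a b assume "a < dim_row (XX i * YY i)" "b < dim_col (XX i * YY i)"
  then have ab: "a < N" "b < N" by (auto simp: XX_def YY_def)
  have "(XX i * YY i) $$ (a,b) = (\<Sum>k<m!i. e i (tt a (K i!k)) * R i k b)"
    using ab by (simp add: XX_def YY_def scalar_prod_def atLeast0LessThan)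
  also have "\<dots> = e i (tt a b)" using fact[OF i ab] .
  finally show "EE i $$ (a,b) = (XX i * YY i) $$ (a,b)" using ab by (simp add: EE_def)
qed (auto simp: EE_def XX_def YY_def)

lemma EE_rank_le: assumes i: "i < 6" shows "vec_space.rank N (EE i) \<le> m!i"
proof -
  have X: "XX i \<in> carrier_mat N (m!i)" by (simp add: XX_def)
  have Y: "YY i \<in> carrier_mat (m!i) N" by (simp add: YY_def)
  have "vec_space.rank N (EE i) \<le> vec_space.rank N (XX i)"
    unfolding EE_fact[OF i] by (rule vec_space.rank_mult_le[OF X Y])
  also have "\<dots> \<le> m!i" by (rule vec_space.rank_le_nc[OF X])
  finally show ?thesis .
qed

lemma one_sum: "1\<^sub>m N = EE 0 + EE 1 + EE 2 + EE 3 + EE 4 + EE 5"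
proof (rule eq_matI)
  fix a b assume "a < dim_row (EE 0 + EE 1 + EE 2 + EE 3 + EE 4 + EE 5)" "b < dim_col (EE 0 + EE 1 + EE 2 + EE 3 + EE 4 + EE 5)"
  then have ab: "a < N" "b < N" by (auto simp: EE_def)
  have t: "tt a b < 6" using tt_lt[OF ab] .
  have "(\<Sum>i<6. P!i!0 * e i (tt a b)) = (if 0 = tt a b then 1 else 0)" using A6[OF _ t] by simp
  moreover have "(\<Sum>i<6. P!i!0 * e i (tt a b)) = (\<Sum>i<6. e i (tt a b))"
    by (intro sum.cong refl) (simp add: P0)
  ultimately have "(\<Sum>i<6. e i (tt a b)) = (if a = b then 1 else 0)" using tt_diag[OF ab] by auto
  then show "1\<^sub>m N $$ (a,b) = (EE 0 + EE 1 + EE 2 + EE 3 + EE 4 + EE 5) $$ (a,b)"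
    using ab by (simp add: EE_def sum6)
qed (auto simp: EE_def)

lemma EE_rank: assumes i: "i < 6" shows "vec_space.rank N (EE i) = m!i"
proof -
  have C: "\<And>i. EE i \<in> carrier_mat N N" by (simp add: EE_def)
  have "N = vec_space.rank N (1\<^sub>m N :: complex mat)"
    using vec_space.low_rank_det_zero[of "1\<^sub>m N :: complex mat" N] by simp
  also have "\<dots> \<le> vec_space.rank N (EE 0 + EE 1 + EE 2 + EE 3 + EE 4) + vec_space.rank N (EE 5)"
    unfolding one_sum by (rule vec_space.rank_subadditive[of _ N N]) (auto simp: C)
  also have "\<dots> \<le> vec_space.rank N (EE 0 + EE 1 + EE 2 + EE 3) + vec_space.rank N (EE 4) + vec_space.rank N (EE 5)"
    using vec_space.rank_subadditive[of "EE 0 + EE 1 + EE 2 + EE 3" N N "EE 4"] by (auto simp: C)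
  also have "\<dots> \<le> vec_space.rank N (EE 0 + EE 1 + EE 2) + vec_space.rank N (EE 3) + vec_space.rank N (EE 4) + vec_space.rank N (EE 5)"
    using vec_space.rank_subadditive[of "EE 0 + EE 1 + EE 2" N N "EE 3"] by (auto simp: C)
  also have "\<dots> \<le> vec_space.rank N (EE 0 + EE 1) + vec_space.rank N (EE 2) + vec_space.rank N (EE 3) + vec_space.rank N (EE 4) + vec_space.rank N (EE 5)"
    using vec_space.rank_subadditive[of "EE 0 + EE 1" N N "EE 2"] by (auto simp: C)
  also have "\<dots> \<le> vec_space.rank N (EE 0) + vec_space.rank N (EE 1) + vec_space.rank N (EE 2) + vec_space.rank N (EE 3) + vec_space.rank N (EE 4) + vec_space.rank N (EE 5)"
    using vec_space.rank_subadditive[of "EE 0" N N "EE 1"] by (auto simp: C)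
  finally have lo: "N \<le> vec_space.rank N (EE 0) + vec_space.rank N (EE 1) + vec_space.rank N (EE 2) + vec_space.rank N (EE 3) + vec_space.rank N (EE 4) + vec_space.rank N (EE 5)" .
  have ms: "m!0 + m!1 + m!2 + m!3 + m!4 + m!5 = N" using msum by (simp add: sum6)
  have u: "vec_space.rank N (EE 0) \<le> m!0" "vec_space.rank N (EE 1) \<le> m!1" "vec_space.rank N (EE 2) \<le> m!2"
     "vec_space.rank N (EE 3) \<le> m!3" "vec_space.rank N (EE 4) \<le> m!4" "vec_space.rank N (EE 5) \<le> m!5"
    by (simp_all add: EE_rank_le)
  have "i = 0 \<or> i = 1 \<or> i = 2 \<or> i = 3 \<or> i = 4 \<or> i = 5" using i by auto
  then show ?thesis using lo ms u by auto
qed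

theorem main: "char_table n P m"
  unfolding char_table_def
proof (intro exI[of _ EE] conjI allI impI)
  show "\<And>i. i < 6 \<Longrightarrow> prim_idem n (EE i)" by (rule EE_prim)
  show "inj_on EE {..<6}" by (rule EE_inj)
  show "\<And>F. prim_idem n F \<Longrightarrow> \<exists>i<6. F = EE i" by (rule EE_complete)
  show "EE 0 = mat (NPhi n) (NPhi n) (\<lambda>_. 1 / of_nat (NPhi n))"
    by (rule eq_matI) (auto simp: EE_def N A7 tt_lt)
  show "\<And>i. i < 6 \<Longrightarrow> vec_space.rank (NPhi n) (EE i) = m ! i" using EE_rank N by simp
  fix j a b :: nat assume j: "j < 6" and a: "a < NPhi n" and b: "b < NPhi n"
  then have ab: "a < N" "b < N" using N by auto
  have "(\<Sum>i<6. P ! i ! j * EE i $$ (a, b)) = (\<Sum>i<6. P ! i ! j * e i (tt a b))"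
    using ab by (simp add: EE_def)
  also have "\<dots> = (if j = tt a b then 1 else 0)" using A6[OF j tt_lt[OF ab]] .
  finally show "adj n j $$ (a, b) = (\<Sum>i<6. P ! i ! j * EE i $$ (a, b))"
    using adj_index[OF j ab] by auto
qed

end



datatype ty = Y0 | Y1 | Y2 | Y3 | Y4 | Y5

type_synonym H6 = "nat \<times> nat \<times> nat \<times> nat \<times> nat \<times> nat"
type_synonym H = "H6 \<times> H6 \<times> H6 \<times> H6 \<times> H6 \<times> H6"

fun sel6 :: "'a \<times> 'a \<times> 'a \<times> 'a \<times> 'a \<times> 'a \<Rightarrow> ty \<Rightarrow> 'a" where
  "sel6 (a,b,c,d,e,f) Y0 = a" | "sel6 (a,b,c,d,e,f) Y1 = b" | "sel6 (a,b,c,d,e,f) Y2 = c"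
| "sel6 (a,b,c,d,e,f) Y3 = d" | "sel6 (a,b,c,d,e,f) Y4 = e" | "sel6 (a,b,c,d,e,f) Y5 = f"

fun up6 :: "ty \<Rightarrow> H6 \<Rightarrow> H6" where
  "up6 Y0 (a,b,c,d,e,f) = (Suc a,b,c,d,e,f)"
| "up6 Y1 (a,b,c,d,e,f) = (a,Suc b,c,d,e,f)"
| "up6 Y2 (a,b,c,d,e,f) = (a,b,Suc c,d,e,f)"
| "up6 Y3 (a,b,c,d,e,f) = (a,b,c,Suc d,e,f)"
| "up6 Y4 (a,b,c,d,e,f) = (a,b,c,d,Suc e,f)"
| "up6 Y5 (a,b,c,d,e,f) = (a,b,c,d,e,Suc f)"

fun hup :: "ty \<Rightarrow> ty \<Rightarrow> H \<Rightarrow> H" where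
  "hup Y0 j (a,b,c,d,e,f) = (up6 j a,b,c,d,e,f)"
| "hup Y1 j (a,b,c,d,e,f) = (a,up6 j b,c,d,e,f)"
| "hup Y2 j (a,b,c,d,e,f) = (a,b,up6 j c,d,e,f)"
| "hup Y3 j (a,b,c,d,e,f) = (a,b,c,up6 j d,e,f)"
| "hup Y4 j (a,b,c,d,e,f) = (a,b,c,d,up6 j e,f)"
| "hup Y5 j (a,b,c,d,e,f) = (a,b,c,d,e,up6 j f)"

definition z6 :: H6 where "z6 = (0,0,0,0,0,0)"
definition h0 :: H where "h0 = (z6,z6,z6,z6,z6,z6)"

fun hist :: "(ty \<times> ty) list \<Rightarrow> H" where
  "hist [] = h0"
| "hist ((i,j)#ps) = hup i j (hist ps)"

definition relchk :: "F4 list \<Rightarrow> F4 list \<Rightarrow> ty \<Rightarrow> bool" where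
  "relchk x y t = (rel 0 x y = (t = Y0) \<and> rel 1 x y = (t = Y1) \<and> rel 2 x y = (t = Y2)
     \<and> rel 3 x y = (t = Y3) \<and> rel 4 x y = (t = Y4) \<and> rel 5 x y = (t = Y5))"

fun zadd :: "int \<times> int \<Rightarrow> int \<times> int \<Rightarrow> int \<times> int" where
  "zadd (a,b) (c,d) = (a+c, b+d)"
fun zmul :: "int \<times> int \<Rightarrow> int \<times> int \<Rightarrow> int \<times> int" where
  "zmul (a,b) (c,d) = (a*c - b*d, a*d + b*c - b*d)"
definition zsum :: "(int \<times> int) list \<Rightarrow> int \<times> int" where
  "zsum xs = foldr zadd xs (0,0)"

definition rkchk :: "(int \<times> int) \<times> (int \<times> int) \<times> (int \<times> int) \<times> (int \<times> int) \<times> (int \<times> int) \<times> (int \<times> int)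
   \<Rightarrow> ty list list \<Rightarrow> ty list list \<Rightarrow> (int \<times> int) list list \<Rightarrow> bool" where
  "rkchk et T X Rc = list_all2 (\<lambda>xrow trow. list_all2 (\<lambda>rc t.
      zsum (map2 (\<lambda>tk r. zmul (sel6 et tk) r) xrow rc) = sel6 et t) Rc trow) X T"
fun tyn :: "ty \<Rightarrow> nat" where
  "tyn Y0 = 0" | "tyn Y1 = 1" | "tyn Y2 = 2" | "tyn Y3 = 3" | "tyn Y4 = 4" | "tyn Y5 = 5"

definition tyof :: "nat \<Rightarrow> ty" where
  "tyof k = (if k = 0 then Y0 else if k = 1 then Y1 else if k = 2 then Y2 else if k = 3 then Y3
     else if k = 4 then Y4 else Y5)"

definition allty :: "ty list" where "allty = [Y0, Y1, Y2, Y3, Y4, Y5]"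

lemma tyn_lt[simp]: "tyn t < 6" by (cases t) auto
lemma tyof_tyn[simp]: "tyof (tyn t) = t" by (cases t) (auto simp: tyof_def)
lemma tyn_tyof: "k < 6 \<Longrightarrow> tyn (tyof k) = k"
  by (auto simp: tyof_def)
lemma tyn_inj[simp]: "(tyn s = tyn t) = (s = t)"
  by (metis tyof_tyn)
lemma tyof_in[simp]: "tyof k \<in> set allty" by (auto simp: tyof_def allty_def)
lemma tyof_vals[simp]: "tyof 0 = Y0" "tyof 1 = Y1" "tyof 2 = Y2" "tyof 3 = Y3" "tyof 4 = Y4" "tyof 5 = Y5"
  by (simp_all add: tyof_def)

lemma sum_tyof: "(\<Sum>a<(6::nat). G (tyof a)) = sum_list (map G allty)"
  by (simp add: sum6 allty_def add_ac tyof_def)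

lemma sel6_up6: "sel6 (up6 j r) tj = sel6 r tj + (if j = tj then 1 else 0)"
  by (cases r; cases j; cases tj) auto
lemma sel6_hup: "sel6 (hup i j h) ti = (if i = ti then up6 j (sel6 h ti) else sel6 h ti)"
  by (cases h; cases i; cases ti) auto
lemma sel6_h0: "sel6 (sel6 h0 ti) tj = 0"
  by (cases ti; cases tj) (auto simp: h0_def z6_def)

lemma hist_count: "sel6 (sel6 (hist ps) ti) tj = length (filter (\<lambda>p. p = (ti,tj)) ps)"
proof (induction ps)
  case Nil then show ?case by (simp add: sel6_h0)
next
  case (Cons p ps)
  obtain i j where p: "p = (i,j)" by (cases p)
  show ?case using Cons by (auto simp: p sel6_hup sel6_up6)
qed

lemma omega_sq: "omega * omega = -1 - omega"
  by (simp add: omega_def complex_eq_iff algebra_simps power2_eq_square)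

lemma cnj_omega: "cnj omega = -1 - omega"
  by (simp add: omega_def complex_eq_iff)

fun emb :: "int \<times> int \<Rightarrow> complex" where
  "emb (a,b) = of_int a + of_int b * omega"

lemma emb_zadd: "emb (zadd p q) = emb p + emb q"
  by (cases p; cases q) (simp add: algebra_simps)

lemma emb_zmul: "emb (zmul p q) = emb p * emb q"
proof (cases p; cases q)
  fix a b c d assume pq: "p = (a,b)" "q = (c,d)"
  have "emb p * emb q = of_int (a*c) + of_int (a*d + b*c) * omega + of_int (b*d) * (omega * omega)"
    by (simp add: pq algebra_simps)
  also have "\<dots> = emb (zmul p q)" by (simp add: pq omega_sq algebra_simps)
  finally show ?thesis by simp
qed

lemma emb_zsum: "emb (zsum xs) = sum_list (map emb xs)"
  by (induction xs) (auto simp: zsum_def emb_zadd)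

lemma emb_inj: assumes "emb p = emb q" shows "p = q"
proof (cases p; cases q)
  fix a b c d assume pq: "p = (a,b)" "q = (c,d)"
  have "Im (emb p) = Im (emb q)" "Re (emb p) = Re (emb q)" using assms by auto
  then have i: "of_int b * sqrt 3 / 2 = of_int d * sqrt 3 / 2"
    and r: "of_int a - of_int b / 2 = (of_int c - of_int d / 2 :: real)"
    by (auto simp: pq omega_def)
  from i have "b = d" by simp
  with r have "a = c" by simp
  with \<open>b = d\<close> show ?thesis using pq by simp
qed

lemma sum_list_div: "sum_list (map (\<lambda>x. f x / (c::complex)) xs) = sum_list (map f xs) / c"
  by (induction xs) (auto simp: add_divide_distrib)

lemma emb_real: "emb (a, 0) = of_int a" by simp




definition phiL2 :: "F4 list list" where "phiL2 = [[F1, F1], [Fa, F1], [Fb, F1], [F1, Fa], [Fa, Fa], [Fb, Fa], [F1, Fb], [Fa, Fb], [Fb, Fb]]"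

definition T2 :: "ty list list" where "T2 = [[Y0, Y4, Y5, Y4, Y1, Y3, Y5, Y3, Y2], [Y5, Y0, Y4, Y3, Y4, Y1, Y2, Y5, Y3], [Y4, Y5, Y0, Y1, Y3, Y4, Y3, Y2, Y5], [Y5, Y3, Y2, Y0, Y4, Y5, Y4, Y1, Y3], [Y2, Y5, Y3, Y5, Y0, Y4, Y3, Y4, Y1], [Y3, Y2, Y5, Y4, Y5, Y0, Y1, Y3, Y4], [Y4, Y1, Y3, Y5, Y3, Y2, Y0, Y4, Y5], [Y3, Y4, Y1, Y2, Y5, Y3, Y5, Y0, Y4], [Y1, Y3, Y4, Y3, Y2, Y5, Y4, Y5, Y0]]"

definition TT2 :: "ty list list" where "TT2 = [[Y0, Y5, Y4, Y5, Y2, Y3, Y4, Y3, Y1], [Y4, Y0, Y5, Y3, Y5, Y2, Y1, Y4, Y3], [Y5, Y4, Y0, Y2, Y3, Y5, Y3, Y1, Y4], [Y4, Y3, Y1, Y0, Y5, Y4, Y5, Y2, Y3], [Y1, Y4, Y3, Y4, Y0, Y5, Y3, Y5, Y2], [Y3, Y1, Y4, Y5, Y4, Y0, Y2, Y3, Y5], [Y5, Y2, Y3, Y4, Y3, Y1, Y0, Y5, Y4], [Y3, Y5, Y2, Y1, Y4, Y3, Y4, Y0, Y5], [Y2, Y3, Y5, Y3, Y1, Y4, Y5, Y4, Y0]]"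

fun expH2 :: "ty \<Rightarrow> H" where
  "expH2 Y0 = ((1, 0, 0, 0, 0, 0), (0, 0, 1, 0, 0, 0), (0, 1, 0, 0, 0, 0), (0, 0, 0, 2, 0, 0), (0, 0, 0, 0, 0, 2), (0, 0, 0, 0, 2, 0))"
| "expH2 Y1 = ((0, 1, 0, 0, 0, 0), (1, 0, 0, 0, 0, 0), (0, 0, 1, 0, 0, 0), (0, 0, 0, 0, 0, 2), (0, 0, 0, 0, 2, 0), (0, 0, 0, 2, 0, 0))"
| "expH2 Y2 = ((0, 0, 1, 0, 0, 0), (0, 1, 0, 0, 0, 0), (1, 0, 0, 0, 0, 0), (0, 0, 0, 0, 2, 0), (0, 0, 0, 2, 0, 0), (0, 0, 0, 0, 0, 2))"
| "expH2 Y3 = ((0, 0, 0, 1, 0, 0), (0, 0, 0, 0, 1, 0), (0, 0, 0, 0, 0, 1), (1, 0, 0, 1, 0, 0), (0, 1, 0, 0, 0, 1), (0, 0, 1, 0, 1, 0))"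
| "expH2 Y4 = ((0, 0, 0, 0, 1, 0), (0, 0, 0, 0, 0, 1), (0, 0, 0, 1, 0, 0), (0, 0, 1, 0, 1, 0), (1, 0, 0, 1, 0, 0), (0, 1, 0, 0, 0, 1))"
| "expH2 Y5 = ((0, 0, 0, 0, 0, 1), (0, 0, 0, 1, 0, 0), (0, 0, 0, 0, 1, 0), (0, 1, 0, 0, 0, 1), (0, 0, 1, 0, 1, 0), (1, 0, 0, 1, 0, 0))"

definition Pz2 :: "(int \<times> int) list list" where "Pz2 = [[(1, 0), (1, 0), (1, 0), (2, 0), (2, 0), (2, 0)], [(1, 0), (0, 1), (-1, -1), (2, 0), (-2, -2), (0, 2)], [(1, 0), (-1, -1), (0, 1), (2, 0), (0, 2), (-2, -2)], [(1, 0), (1, 0), (1, 0), (-1, 0), (-1, 0), (-1, 0)], [(1, 0), (0, 1), (-1, -1), (-1, 0), (1, 1), (0, -1)], [(1, 0), (-1, -1), (0, 1), (-1, 0), (0, -1), (1, 1)]]"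

definition K2 :: "nat list list" where "K2 = [[0], [0], [0], [0, 1], [0, 1], [0, 1]]"

definition Xt2 :: "ty list list list" where "Xt2 = [[[Y0], [Y5], [Y4], [Y5], [Y2], [Y3], [Y4], [Y3], [Y1]], [[Y0], [Y5], [Y4], [Y5], [Y2], [Y3], [Y4], [Y3], [Y1]], [[Y0], [Y5], [Y4], [Y5], [Y2], [Y3], [Y4], [Y3], [Y1]], [[Y0, Y4], [Y5, Y0], [Y4, Y5], [Y5, Y3], [Y2, Y5], [Y3, Y2], [Y4, Y1], [Y3, Y4], [Y1, Y3]], [[Y0, Y4], [Y5, Y0], [Y4, Y5], [Y5, Y3], [Y2, Y5], [Y3, Y2], [Y4, Y1], [Y3, Y4], [Y1, Y3]], [[Y0, Y4], [Y5, Y0], [Y4, Y5], [Y5, Y3], [Y2, Y5], [Y3, Y2], [Y4, Y1], [Y3, Y4], [Y1, Y3]]]"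

definition Rc2 :: "(int \<times> int) list list list" where "Rc2 = [[[(1, 0)], [(1, 0)], [(1, 0)], [(1, 0)], [(1, 0)], [(1, 0)], [(1, 0)], [(1, 0)], [(1, 0)]], [[(1, 0)], [(0, 1)], [(-1, -1)], [(0, 1)], [(-1, -1)], [(1, 0)], [(-1, -1)], [(1, 0)], [(0, 1)]], [[(1, 0)], [(-1, -1)], [(0, 1)], [(-1, -1)], [(0, 1)], [(1, 0)], [(0, 1)], [(1, 0)], [(-1, -1)]], [[(1, 0), (0, 0)], [(0, 0), (1, 0)], [(-1, 0), (-1, 0)], [(-1, 0), (-1, 0)], [(1, 0), (0, 0)], [(0, 0), (1, 0)], [(0, 0), (1, 0)], [(-1, 0), (-1, 0)], [(1, 0), (0, 0)]], [[(1, 0), (0, 0)], [(0, 0), (1, 0)], [(1, 1), (0, -1)], [(0, -1), (-1, 0)], [(-1, -1), (0, 0)], [(0, 0), (-1, -1)], [(0, 0), (0, 1)], [(-1, 0), (1, 1)], [(0, 1), (0, 0)]], [[(1, 0), (0, 0)], [(0, 0), (1, 0)], [(0, -1), (1, 1)], [(1, 1), (-1, 0)], [(0, 1), (0, 0)], [(0, 0), (0, 1)], [(0, 0), (-1, -1)], [(-1, 0), (0, -1)], [(-1, -1), (0, 0)]]]"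

definition et2 :: "((int \<times> int) \<times> (int \<times> int) \<times> (int \<times> int) \<times> (int \<times> int) \<times> (int \<times> int) \<times> (int \<times> int)) list" where "et2 = [((6, 0), (6, 0), (6, 0), (6, 0), (6, 0), (6, 0)), ((6, 0), (-6, -6), (0, 6), (6, 0), (0, 6), (-6, -6)), ((6, 0), (0, 6), (-6, -6), (6, 0), (-6, -6), (0, 6)), ((12, 0), (12, 0), (12, 0), (-6, 0), (-6, 0), (-6, 0)), ((12, 0), (-12, -12), (0, 12), (-6, 0), (0, -6), (6, 6)), ((12, 0), (0, 12), (-12, -12), (-6, 0), (6, 6), (0, -6))]"

definition Pst2 :: "complex list list" where "Pst2 = [[1, 1, 1, 2, 2, 2],
            [1, omega, cnj omega, 2, 2 * cnj omega, 2 * omega],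
            [1, cnj omega, omega, 2, 2 * omega, 2 * cnj omega],
            [1, 1, 1, -1, -1, -1],
            [1, omega, cnj omega, -1, - cnj omega, - omega],
            [1, cnj omega, omega, -1, - omega, - cnj omega]]"
definition mm2 :: "nat list" where "mm2 = [1, 1, 1, 2, 2, 2]"

lemma c_phi2: "phi_list 2 = phiL2" by code_simp
lemma c_len2: "length phiL2 = 9 \<and> length T2 = 9 \<and> list_all (\<lambda>r. length r = 9) T2 \<and> length TT2 = 9 \<and> list_all (\<lambda>r. length r = 9) TT2"
  by code_simp
lemma c_tt2: "TT2 = List.transpose T2" by code_simp
lemma c_rel2: "list_all2 (\<lambda>x row. list_all2 (\<lambda>y t. relchk x y t) phiL2 row) phiL2 T2" by code_simp
lemma c_diag2: "map (map (\<lambda>t. t = Y0)) T2 = map (\<lambda>a. map (\<lambda>b. a = b) [0..<9]) [0..<9]" by code_simp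
lemma c_hist2: "list_all (\<lambda>row. list_all2 (\<lambda>col t. hist (zip row col) = expH2 t) TT2 row) T2" by code_simp
lemma c_sym2: "\<forall>ti\<in>set allty. \<forall>tj\<in>set allty. \<forall>tk\<in>set allty. sel6 (sel6 (expH2 tk) ti) tj = sel6 (sel6 (expH2 tk) tj) ti"
  by code_simp
lemma c_wit2: "set (T2!0) = set allty" by code_simp
lemma c_A42: "\<forall>i\<in>set [0..<6]. \<forall>b\<in>set [0..<6]. \<forall>tk\<in>set allty.
   zsum (map (\<lambda>ta. zmul (sel6 (et2!i) ta) (int (sel6 (sel6 (expH2 tk) ta) (tyof b)), 0)) allty) = zmul (Pz2!i!b) (sel6 (et2!i) tk)"
  by code_simp
lemma c_A52: "\<forall>i\<in>set [0..<6]. \<forall>j\<in>set [0..<6]. zsum (map (\<lambda>b. zmul (Pz2!i!b) (sel6 (et2!j) (tyof b))) [0..<6]) = (if i = j then (54,0) else (0,0))"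
  by code_simp
lemma c_A62: "\<forall>j\<in>set [0..<6]. \<forall>tk\<in>set allty. zsum (map (\<lambda>i. zmul (Pz2!i!j) (sel6 (et2!i) tk)) [0..<6]) = (if tyof j = tk then (54,0) else (0,0))"
  by code_simp
lemma c_A72: "\<forall>t\<in>set allty. sel6 (et2!0) t = (6,0)" by code_simp
lemma c_A82: "\<forall>i\<in>set [0..<6]. sel6 (et2!i) Y0 \<noteq> (0,0)" by code_simp
lemma c_P02: "\<forall>i\<in>set [0..<6]. Pz2!i!0 = (1,0)" by code_simp
lemma c_Pz2: "length Pz2 = 6 \<and> list_all (\<lambda>r. length r = 6) Pz2 \<and> length K2 = 6" by code_simp
lemma c_K2: "\<forall>i\<in>set [0..<6]. length (K2!i) = mm2!i \<and> list_all (\<lambda>k. k < 9) (K2!i)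
   \<and> length (Xt2!i) = 9 \<and> list_all (\<lambda>r. length r = mm2!i) (Xt2!i)
   \<and> length (Rc2!i) = 9 \<and> list_all (\<lambda>c. length c = mm2!i) (Rc2!i)"
  unfolding mm2_def by code_simp
lemma c_Xt2: "Xt2 = map (\<lambda>Ki. map (\<lambda>r. map (nth r) Ki) T2) K2" by code_simp
lemma c_rk2: "\<forall>i\<in>set [0..<6]. rkchk (et2!i) T2 (Xt2!i) (Rc2!i)" by code_simp
lemma c_P2: "Pst2 = map (map emb) Pz2"
  by (simp add: Pst2_def Pz2_def cnj_omega algebra_simps)
lemma c_msum2: "(\<Sum>i<6. mm2!i) = 9" by (simp add: sum6 mm2_def)

definition tt2 :: "nat \<Rightarrow> nat \<Rightarrow> nat" where "tt2 a b = tyn (T2!a!b)"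
definition pc2 :: "nat \<Rightarrow> nat \<Rightarrow> nat \<Rightarrow> nat" where
  "pc2 i j k = sel6 (sel6 (expH2 (tyof k)) (tyof i)) (tyof j)"
definition e2 :: "nat \<Rightarrow> nat \<Rightarrow> complex" where "e2 i k = emb (sel6 (et2!i) (tyof k)) / 54"
definition R2 :: "nat \<Rightarrow> nat \<Rightarrow> nat \<Rightarrow> complex" where "R2 i k b = emb (Rc2!i!b!k)"
definition KK2 :: "nat \<Rightarrow> nat list" where "KK2 i = K2!i"

lemma row2: "a < 9 \<Longrightarrow> length (T2!a) = 9" using c_len2 by (simp add: list_all_length)
lemma TT2: "b < 9 \<Longrightarrow> z < 9 \<Longrightarrow> TT2!b!z = T2!z!b"
proof -
  assume b: "b < 9" and z: "z < 9"
  have "length (List.transpose T2) = 9" using c_tt2 c_len2 by simp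
  then have "List.transpose T2 ! b = map (\<lambda>xs. xs ! b) (filter (\<lambda>ys. b < length ys) T2)"
    using b by (simp add: nth_transpose)
  also have "filter (\<lambda>ys. b < length ys) T2 = T2"
    using c_len2 b by (auto simp: filter_id_conv list_all_iff)
  finally show ?thesis using c_tt2 c_len2 z by simp
qed

interpretation I2: cdata 2 9 tt2 pc2 Pst2 mm2 e2 KK2 R2
proof
  show "NPhi 2 = 9" using c_phi2 c_len2 by simp
  show "\<And>a b. a < 9 \<Longrightarrow> b < 9 \<Longrightarrow> tt2 a b < 6" by (simp add: tt2_def)
  show "\<And>a b l. a < 9 \<Longrightarrow> b < 9 \<Longrightarrow> l < 6 \<Longrightarrow> rel l (phi_list 2 ! a) (phi_list 2 ! b) = (tt2 a b = l)"
  proof -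
    fix a b l :: nat assume a: "a < 9" and b: "b < 9" and l: "l < 6"
    have "list_all2 (\<lambda>y t. relchk (phiL2!a) y t) phiL2 (T2!a)"
      using list_all2_nthD[OF c_rel2] a c_len2 by simp
    then have rc: "relchk (phiL2!a) (phiL2!b) (T2!a!b)"
      using list_all2_nthD b c_len2 by fastforce
    have "rel (tyn (tyof l)) (phiL2!a) (phiL2!b) = (T2!a!b = tyof l)"
      using rc by (cases "tyof l") (auto simp: relchk_def)
    then show "rel l (phi_list 2 ! a) (phi_list 2 ! b) = (tt2 a b = l)"
      using l tyn_tyof[OF l] by (auto simp: c_phi2 tt2_def)
  qed
  show "\<And>a b. a < 9 \<Longrightarrow> b < 9 \<Longrightarrow> (tt2 a b = 0) = (a = b)"
  proof -
    fix a b :: nat assume a: "a < 9" and b: "b < 9"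
    have "map (map (\<lambda>t. t = Y0)) T2 ! a ! b = (T2!a!b = Y0)" using a b c_len2 row2 by simp
    also have "\<dots> = (tt2 a b = 0)" by (cases "T2!a!b") (auto simp: tt2_def)
    finally show "(tt2 a b = 0) = (a = b)" using c_diag2 a b by simp
  qed
  show "\<And>a b i j. a < 9 \<Longrightarrow> b < 9 \<Longrightarrow> i < 6 \<Longrightarrow> j < 6 \<Longrightarrow>
      card {z. z < 9 \<and> tt2 a z = i \<and> tt2 z b = j} = pc2 i j (tt2 a b)"
  proof -
    fix a b i j :: nat assume a: "a < 9" and b: "b < 9" and i: "i < 6" and j: "j < 6"
    have "list_all2 (\<lambda>col t. hist (zip (T2!a) col) = expH2 t) TT2 (T2!a)"
      using c_hist2 a c_len2 by (simp add: list_all_length)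
    then have h: "hist (zip (T2!a) (TT2!b)) = expH2 (T2!a!b)"
      using list_all2_nthD b c_len2 by fastforce
    have "pc2 i j (tt2 a b) = length (filter (\<lambda>p. p = (tyof i, tyof j)) (zip (T2!a) (TT2!b)))"
      unfolding pc2_def tt2_def tyof_tyn h[symmetric] by (rule hist_count)
    also have "\<dots> = card {z. z < 9 \<and> (T2!a!z, TT2!b!z) = (tyof i, tyof j)}"
      using row2[OF a] c_len2 b by (simp add: length_filter_conv_card list_all_length) (rule arg_cong[where f=card], auto simp: nth_zip row2)
    also have "{z. z < 9 \<and> (T2!a!z, TT2!b!z) = (tyof i, tyof j)} = {z. z < 9 \<and> tt2 a z = i \<and> tt2 z b = j}"
    proof -
      have "\<And>t k. k < 6 \<Longrightarrow> (t = tyof k) = (tyn t = k)" by (metis tyn_tyof tyof_tyn)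
      then show ?thesis using i j TT2[OF b] by (auto simp: tt2_def)
    qed
    finally show "card {z. z < 9 \<and> tt2 a z = i \<and> tt2 z b = j} = pc2 i j (tt2 a b)" by simp
  qed
  show "\<And>i j k. i < 6 \<Longrightarrow> j < 6 \<Longrightarrow> k < 6 \<Longrightarrow> pc2 i j k = pc2 j i k"
    using c_sym2 by (simp add: pc2_def)
  show "\<And>k. k < 6 \<Longrightarrow> \<exists>b<9. tt2 0 b = k"
  proof -
    fix k :: nat assume k: "k < 6"
    have "tyof k \<in> set (T2!0)" using c_wit2 by simp
    then obtain b where "b < length (T2!0)" "T2!0!b = tyof k" by (metis in_set_conv_nth)
    then show "\<exists>b<9. tt2 0 b = k" using row2[of 0] tyn_tyof[OF k] by (auto simp: tt2_def)
  qed
  show "0 < (9::nat)" by simp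
  have Pnth: "\<And>i b. i < 6 \<Longrightarrow> b < 6 \<Longrightarrow> Pst2!i!b = emb (Pz2!i!b)"
    using c_Pz2 by (simp add: c_P2 list_all_length)
  show "\<And>i b k. i < 6 \<Longrightarrow> b < 6 \<Longrightarrow> k < 6 \<Longrightarrow> (\<Sum>a<6. e2 i a * of_nat (pc2 a b k)) = Pst2!i!b * e2 i k"
  proof -
    fix i b k :: nat assume i: "i < 6" and b: "b < 6" and k: "k < 6"
    let ?G = "\<lambda>ta. zmul (sel6 (et2!i) ta) (int (sel6 (sel6 (expH2 (tyof k)) ta) (tyof b)), 0)"
    have "(\<Sum>a<6. e2 i a * of_nat (pc2 a b k)) = (\<Sum>a<6. emb (?G (tyof a)) / 54)"
      by (intro sum.cong refl) (simp add: e2_def pc2_def emb_zmul)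
    also have "\<dots> = sum_list (map (\<lambda>ta. emb (?G ta) / 54) allty)"
      by (rule sum_tyof)
    also have "\<dots> = emb (zsum (map ?G allty)) / 54"
      by (simp add: emb_zsum sum_list_div o_def)
    also have "\<dots> = emb (zmul (Pz2!i!b) (sel6 (et2!i) (tyof k))) / 54"
      using c_A42 i b by simp
    also have "\<dots> = Pst2!i!b * e2 i k" using Pnth[OF i b] by (simp add: emb_zmul e2_def)
    finally show "(\<Sum>a<6. e2 i a * of_nat (pc2 a b k)) = Pst2!i!b * e2 i k" .
  qed
  show "\<And>i j. i < 6 \<Longrightarrow> j < 6 \<Longrightarrow> (\<Sum>b<6. Pst2!i!b * e2 j b) = (if i=j then 1 else 0)"
  proof -
    fix i j :: nat assume i: "i < 6" and j: "j < 6"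
    let ?G = "\<lambda>b. zmul (Pz2!i!b) (sel6 (et2!j) (tyof b))"
    have "(\<Sum>b<6. Pst2!i!b * e2 j b) = (\<Sum>b<6. emb (?G b) / 54)"
      by (intro sum.cong refl) (simp add: Pnth i e2_def emb_zmul)
    also have "\<dots> = (\<Sum>b<6. emb (?G b)) / 54" by (simp add: sum_divide_distrib)
    also have "\<dots> = emb (zsum (map ?G [0..<6])) / 54"
      by (simp add: emb_zsum sum_set_upt_conv_sum_list_nat[symmetric] lessThan_atLeast0 atLeastLessThan_upt[symmetric] o_def)
    also have "\<dots> = (if i=j then 1 else 0)" using c_A52 i j by simp
    finally show "(\<Sum>b<6. Pst2!i!b * e2 j b) = (if i=j then 1 else 0)" .
  qed
  show "\<And>j k. j < 6 \<Longrightarrow> k < 6 \<Longrightarrow> (\<Sum>i<6. Pst2!i!j * e2 i k) = (if j=k then 1 else 0)"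
  proof -
    fix j k :: nat assume j: "j < 6" and k: "k < 6"
    let ?G = "\<lambda>i. zmul (Pz2!i!j) (sel6 (et2!i) (tyof k))"
    have "(\<Sum>i<6. Pst2!i!j * e2 i k) = (\<Sum>i<6. emb (?G i) / 54)"
      by (intro sum.cong refl) (simp add: Pnth j e2_def emb_zmul)
    also have "\<dots> = (\<Sum>b<6. emb (?G b)) / 54" by (simp add: sum_divide_distrib)
    also have "\<dots> = emb (zsum (map ?G [0..<6])) / 54"
      by (simp add: emb_zsum sum_set_upt_conv_sum_list_nat[symmetric] lessThan_atLeast0 atLeastLessThan_upt[symmetric] o_def)
    also have "\<dots> = (if tyof j = tyof k then 1 else 0)" using c_A62 j by simp
    also have "\<dots> = (if j=k then 1 else 0)" using j k by (metis tyn_tyof)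
    finally show "(\<Sum>i<6. Pst2!i!j * e2 i k) = (if j=k then 1 else 0)" .
  qed
  show "\<And>k. k < 6 \<Longrightarrow> e2 0 k = 1 / of_nat 9" using c_A72 by (simp add: e2_def)
  show "\<And>i. i < 6 \<Longrightarrow> e2 i 0 \<noteq> 0"
  proof
    fix i :: nat assume i: "i < 6" and h: "e2 i 0 = 0"
    then have "emb (sel6 (et2!i) Y0) = emb (0,0)" by (simp add: e2_def)
    then show False using emb_inj c_A82 i by fastforce
  qed
  show "\<And>i. i < 6 \<Longrightarrow> Pst2!i!0 = 1" using c_P02 Pnth by simp
  show "\<And>i k. i < 6 \<Longrightarrow> k < mm2!i \<Longrightarrow> KK2 i ! k < 9"
    using c_K2 by (auto simp: KK2_def list_all_length)
  show "\<And>i a b. i < 6 \<Longrightarrow> a < 9 \<Longrightarrow> b < 9 \<Longrightarrow>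
     (\<Sum>k<mm2!i. e2 i (tt2 a (KK2 i!k)) * R2 i k b) = e2 i (tt2 a b)"
  proof -
    fix i a b :: nat assume i: "i < 6" and a: "a < 9" and b: "b < 9"
    have K: "length (K2!i) = mm2!i" "length (Xt2!i) = 9" "list_all (\<lambda>r. length r = mm2!i) (Xt2!i)"
       "length (Rc2!i) = 9" "list_all (\<lambda>c. length c = mm2!i) (Rc2!i)"
      using c_K2 i by auto
    have XL: "length (Xt2!i!a) = mm2!i" using K a by (simp add: list_all_length)
    have RL: "length (Rc2!i!b) = mm2!i" using K b by (simp add: list_all_length)
    have lK: "i < length K2" using c_Pz2 i by simp
    have xt: "Xt2!i!a!k = T2!a!(K2!i!k)" if k: "k < mm2!i" for k
    proof -
      have "Xt2!i = map (\<lambda>r. map (nth r) (K2!i)) T2" by (subst c_Xt2) (simp add: lK)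
      moreover have "a < length T2" using a c_len2 by simp
      ultimately have "Xt2!i!a = map (nth (T2!a)) (K2!i)" by simp
      then show ?thesis using k K(1) by simp
    qed
    have "list_all2 (\<lambda>rc t. zsum (map2 (\<lambda>tk r. zmul (sel6 (et2!i) tk) r) (Xt2!i!a) rc) = sel6 (et2!i) t) (Rc2!i) (T2!a)"
    proof -
      have "rkchk (et2!i) T2 (Xt2!i) (Rc2!i)" using c_rk2 i by simp
      then show ?thesis unfolding rkchk_def using a K(2) by (auto dest: list_all2_nthD)
    qed
    then have ck: "zsum (map2 (\<lambda>tk r. zmul (sel6 (et2!i) tk) r) (Xt2!i!a) (Rc2!i!b)) = sel6 (et2!i) (T2!a!b)"
      using list_all2_nthD b K(4) by fastforce
    have "(\<Sum>k<mm2!i. e2 i (tt2 a (KK2 i!k)) * R2 i k b)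
        = (\<Sum>k<mm2!i. emb (zmul (sel6 (et2!i) (Xt2!i!a!k)) (Rc2!i!b!k)) / 54)"
      by (intro sum.cong refl) (simp add: xt e2_def tt2_def KK2_def R2_def emb_zmul)
    also have "\<dots> = sum_list (map2 (\<lambda>tk r. emb (zmul (sel6 (et2!i) tk) r) / 54) (Xt2!i!a) (Rc2!i!b))"
      using XL RL by (simp add: sum_list_sum_nth atLeast0LessThan)
    also have "\<dots> = emb (zsum (map2 (\<lambda>tk r. zmul (sel6 (et2!i) tk) r) (Xt2!i!a) (Rc2!i!b))) / 54"
      by (simp only: emb_zsum map_map o_def case_prod_unfold sum_list_div)
    also have "\<dots> = e2 i (tt2 a b)" using ck by (simp add: e2_def tt2_def)
    finally show "(\<Sum>k<mm2!i. e2 i (tt2 a (KK2 i!k)) * R2 i k b) = e2 i (tt2 a b)" .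
  qed
  show "(\<Sum>i<6. mm2!i) = 9" by (rule c_msum2)
qed

lemma main2: "char_table 2 Pst2 mm2" by (rule I2.main)




definition phiL3 :: "F4 list list" where "phiL3 = [[F1, F1, F0], [Fa, F1, F0], [Fb, F1, F0], [F1, Fa, F0], [Fa, Fa, F0], [Fb, Fa, F0], [F1, Fb, F0], [Fa, Fb, F0], [Fb, Fb, F0], [F1, F0, F1], [Fa, F0, F1], [Fb, F0, F1], [F0, F1, F1], [F0, Fa, F1], [F0, Fb, F1], [F1, F0, Fa], [Fa, F0, Fa], [Fb, F0, Fa], [F0, F1, Fa], [F0, Fa, Fa], [F0, Fb, Fa], [F1, F0, Fb], [Fa, F0, Fb], [Fb, F0, Fb], [F0, F1, Fb], [F0, Fa, Fb], [F0, Fb, Fb]]"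

definition T3 :: "ty list list" where "T3 = [[Y0, Y4, Y5, Y4, Y1, Y3, Y5, Y3, Y2, Y3, Y5, Y4, Y3, Y5, Y4, Y3, Y5, Y4, Y3, Y5, Y4, Y3, Y5, Y4, Y3, Y5, Y4], [Y5, Y0, Y4, Y3, Y4, Y1, Y2, Y5, Y3, Y4, Y3, Y5, Y3, Y5, Y4, Y4, Y3, Y5, Y3, Y5, Y4, Y4, Y3, Y5, Y3, Y5, Y4], [Y4, Y5, Y0, Y1, Y3, Y4, Y3, Y2, Y5, Y5, Y4, Y3, Y3, Y5, Y4, Y5, Y4, Y3, Y3, Y5, Y4, Y5, Y4, Y3, Y3, Y5, Y4], [Y5, Y3, Y2, Y0, Y4, Y5, Y4, Y1, Y3, Y3, Y5, Y4, Y4, Y3, Y5, Y3, Y5, Y4, Y4, Y3, Y5, Y3, Y5, Y4, Y4, Y3, Y5], [Y2, Y5, Y3, Y5, Y0, Y4, Y3, Y4, Y1, Y4, Y3, Y5, Y4, Y3, Y5, Y4, Y3, Y5, Y4, Y3, Y5, Y4, Y3, Y5, Y4, Y3, Y5], [Y3, Y2, Y5, Y4, Y5, Y0, Y1, Y3, Y4, Y5, Y4, Y3, Y4, Y3, Y5, Y5, Y4, Y3, Y4, Y3, Y5, Y5, Y4, Y3, Y4, Y3, Y5], [Y4, Y1, Y3, Y5, Y3, Y2, Y0, Y4, Y5, Y3, Y5, Y4, Y5, Y4, Y3, Y3, Y5, Y4, Y5, Y4, Y3, Y3, Y5, Y4, Y5, Y4, Y3], [Y3, Y4, Y1, Y2,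 Y5, Y3, Y5, Y0, Y4, Y4, Y3, Y5, Y5, Y4, Y3, Y4, Y3, Y5, Y5, Y4, Y3, Y4, Y3, Y5, Y5, Y4, Y3], [Y1, Y3, Y4, Y3, Y2, Y5, Y4, Y5, Y0, Y5, Y4, Y3, Y5, Y4, Y3, Y5, Y4, Y3, Y5, Y4, Y3, Y5, Y4, Y3, Y5, Y4, Y3], [Y3, Y5, Y4, Y3, Y5, Y4, Y3, Y5, Y4, Y0, Y4, Y5, Y3, Y3, Y3, Y4, Y1, Y3, Y5, Y5, Y5, Y5, Y3, Y2, Y4, Y4, Y4], [Y4, Y3, Y5, Y4, Y3, Y5, Y4, Y3, Y5, Y5, Y0, Y4, Y3, Y3, Y3, Y3, Y4, Y1, Y5, Y5, Y5, Y2, Y5, Y3, Y4, Y4, Y4], [Y5, Y4, Y3, Y5, Y4, Y3, Y5, Y4, Y3, Y4, Y5, Y0, Y3, Y3, Y3, Y1, Y3, Y4, Y5, Y5, Y5, Y3, Y2, Y5, Y4, Y4, Y4], [Y3, Y3, Y3, Y5, Y5, Y5, Y4, Y4, Y4, Y3, Y3, Y3, Y0, Y4, Y5, Y5, Y5, Y5, Y4, Y1, Y3, Y4, Y4, Y4, Y5, Y3, Y2], [Y4, Y4, Y4, Y3, Y3, Y3, Y5, Y5, Y5, Y3, Y3, Y3, Y5, Y0, Y4, Y5, Y5, Y5, Y3, Y4, Y1, Y4, Y4, Y4, Y2, Y5, Y3], [Y5, Y5, Y5, Y4, Y4, Y4, Y3, Y3, Y3, Y3, Y3, Y3, Y4,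 Y5, Y0, Y5, Y5, Y5, Y1, Y3, Y4, Y4, Y4, Y4, Y3, Y2, Y5], [Y3, Y5, Y4, Y3, Y5, Y4, Y3, Y5, Y4, Y5, Y3, Y2, Y4, Y4, Y4, Y0, Y4, Y5, Y3, Y3, Y3, Y4, Y1, Y3, Y5, Y5, Y5], [Y4, Y3, Y5, Y4, Y3, Y5, Y4, Y3, Y5, Y2, Y5, Y3, Y4, Y4, Y4, Y5, Y0, Y4, Y3, Y3, Y3, Y3, Y4, Y1, Y5, Y5, Y5], [Y5, Y4, Y3, Y5, Y4, Y3, Y5, Y4, Y3, Y3, Y2, Y5, Y4, Y4, Y4, Y4, Y5, Y0, Y3, Y3, Y3, Y1, Y3, Y4, Y5, Y5, Y5], [Y3, Y3, Y3, Y5, Y5, Y5, Y4, Y4, Y4, Y4, Y4, Y4, Y5, Y3, Y2, Y3, Y3, Y3, Y0, Y4, Y5, Y5, Y5, Y5, Y4, Y1, Y3], [Y4, Y4, Y4, Y3, Y3, Y3, Y5, Y5, Y5, Y4, Y4, Y4, Y2, Y5, Y3, Y3, Y3, Y3, Y5, Y0, Y4, Y5, Y5, Y5, Y3, Y4, Y1], [Y5, Y5, Y5, Y4, Y4, Y4, Y3, Y3, Y3, Y4, Y4, Y4, Y3, Y2, Y5, Y3, Y3, Y3, Y4, Y5, Y0, Y5, Y5, Y5, Y1, Y3, Y4], [Y3, Y5, Y4, Y3, Y5, Y4, Y3, Y5, Y4, Y4, Y1, Y3, Y5, Y5, Y5, Y5, Y3, Y2, Y4, Y4, Y4, Y0,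 Y4, Y5, Y3, Y3, Y3], [Y4, Y3, Y5, Y4, Y3, Y5, Y4, Y3, Y5, Y3, Y4, Y1, Y5, Y5, Y5, Y2, Y5, Y3, Y4, Y4, Y4, Y5, Y0, Y4, Y3, Y3, Y3], [Y5, Y4, Y3, Y5, Y4, Y3, Y5, Y4, Y3, Y1, Y3, Y4, Y5, Y5, Y5, Y3, Y2, Y5, Y4, Y4, Y4, Y4, Y5, Y0, Y3, Y3, Y3], [Y3, Y3, Y3, Y5, Y5, Y5, Y4, Y4, Y4, Y5, Y5, Y5, Y4, Y1, Y3, Y4, Y4, Y4, Y5, Y3, Y2, Y3, Y3, Y3, Y0, Y4, Y5], [Y4, Y4, Y4, Y3, Y3, Y3, Y5, Y5, Y5, Y5, Y5, Y5, Y3, Y4, Y1, Y4, Y4, Y4, Y2, Y5, Y3, Y3, Y3, Y3, Y5, Y0, Y4], [Y5, Y5, Y5, Y4, Y4, Y4, Y3, Y3, Y3, Y5, Y5, Y5, Y1, Y3, Y4, Y4, Y4, Y4, Y3, Y2, Y5, Y3, Y3, Y3, Y4, Y5, Y0]]"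

definition TT3 :: "ty list list" where "TT3 = [[Y0, Y5, Y4, Y5, Y2, Y3, Y4, Y3, Y1, Y3, Y4, Y5, Y3, Y4, Y5, Y3, Y4, Y5, Y3, Y4, Y5, Y3, Y4, Y5, Y3, Y4, Y5], [Y4, Y0, Y5, Y3, Y5, Y2, Y1, Y4, Y3, Y5, Y3, Y4, Y3, Y4, Y5, Y5, Y3, Y4, Y3, Y4, Y5, Y5, Y3, Y4, Y3, Y4, Y5], [Y5, Y4, Y0, Y2, Y3, Y5, Y3, Y1, Y4, Y4, Y5, Y3, Y3, Y4, Y5, Y4, Y5, Y3, Y3, Y4, Y5, Y4, Y5, Y3, Y3, Y4, Y5], [Y4, Y3, Y1, Y0, Y5, Y4, Y5, Y2, Y3, Y3, Y4, Y5, Y5, Y3, Y4, Y3, Y4, Y5, Y5, Y3, Y4, Y3, Y4, Y5, Y5, Y3, Y4], [Y1, Y4, Y3, Y4, Y0, Y5, Y3, Y5, Y2, Y5, Y3, Y4, Y5, Y3, Y4, Y5, Y3, Y4, Y5, Y3, Y4, Y5, Y3, Y4, Y5, Y3, Y4], [Y3, Y1, Y4, Y5, Y4, Y0, Y2, Y3, Y5, Y4, Y5, Y3, Y5, Y3, Y4, Y4, Y5, Y3, Y5, Y3, Y4, Y4, Y5, Y3, Y5, Y3, Y4], [Y5, Y2, Y3, Y4, Y3, Y1, Y0, Y5, Y4, Y3, Y4, Y5, Y4, Y5, Y3, Y3, Y4, Y5, Y4, Y5, Y3, Y3, Y4, Y5, Y4, Y5, Y3], [Y3, Y5, Y2, Y1,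 Y4, Y3, Y4, Y0, Y5, Y5, Y3, Y4, Y4, Y5, Y3, Y5, Y3, Y4, Y4, Y5, Y3, Y5, Y3, Y4, Y4, Y5, Y3], [Y2, Y3, Y5, Y3, Y1, Y4, Y5, Y4, Y0, Y4, Y5, Y3, Y4, Y5, Y3, Y4, Y5, Y3, Y4, Y5, Y3, Y4, Y5, Y3, Y4, Y5, Y3], [Y3, Y4, Y5, Y3, Y4, Y5, Y3, Y4, Y5, Y0, Y5, Y4, Y3, Y3, Y3, Y5, Y2, Y3, Y4, Y4, Y4, Y4, Y3, Y1, Y5, Y5, Y5], [Y5, Y3, Y4, Y5, Y3, Y4, Y5, Y3, Y4, Y4, Y0, Y5, Y3, Y3, Y3, Y3, Y5, Y2, Y4, Y4, Y4, Y1, Y4, Y3, Y5, Y5, Y5], [Y4, Y5, Y3, Y4, Y5, Y3, Y4, Y5, Y3, Y5, Y4, Y0, Y3, Y3, Y3, Y2, Y3, Y5, Y4, Y4, Y4, Y3, Y1, Y4, Y5, Y5, Y5], [Y3, Y3, Y3, Y4, Y4, Y4, Y5, Y5, Y5, Y3, Y3, Y3, Y0, Y5, Y4, Y4, Y4, Y4, Y5, Y2, Y3, Y5, Y5, Y5, Y4, Y3, Y1], [Y5, Y5, Y5, Y3, Y3, Y3, Y4, Y4, Y4, Y3, Y3, Y3, Y4, Y0, Y5, Y4, Y4, Y4, Y3, Y5, Y2, Y5, Y5, Y5, Y1, Y4, Y3], [Y4, Y4, Y4, Y5, Y5, Y5, Y3, Y3, Y3, Y3, Y3, Y3, Y5,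 Y4, Y0, Y4, Y4, Y4, Y2, Y3, Y5, Y5, Y5, Y5, Y3, Y1, Y4], [Y3, Y4, Y5, Y3, Y4, Y5, Y3, Y4, Y5, Y4, Y3, Y1, Y5, Y5, Y5, Y0, Y5, Y4, Y3, Y3, Y3, Y5, Y2, Y3, Y4, Y4, Y4], [Y5, Y3, Y4, Y5, Y3, Y4, Y5, Y3, Y4, Y1, Y4, Y3, Y5, Y5, Y5, Y4, Y0, Y5, Y3, Y3, Y3, Y3, Y5, Y2, Y4, Y4, Y4], [Y4, Y5, Y3, Y4, Y5, Y3, Y4, Y5, Y3, Y3, Y1, Y4, Y5, Y5, Y5, Y5, Y4, Y0, Y3, Y3, Y3, Y2, Y3, Y5, Y4, Y4, Y4], [Y3, Y3, Y3, Y4, Y4, Y4, Y5, Y5, Y5, Y5, Y5, Y5, Y4, Y3, Y1, Y3, Y3, Y3, Y0, Y5, Y4, Y4, Y4, Y4, Y5, Y2, Y3], [Y5, Y5, Y5, Y3, Y3, Y3, Y4, Y4, Y4, Y5, Y5, Y5, Y1, Y4, Y3, Y3, Y3, Y3, Y4, Y0, Y5, Y4, Y4, Y4, Y3, Y5, Y2], [Y4, Y4, Y4, Y5, Y5, Y5, Y3, Y3, Y3, Y5, Y5, Y5, Y3, Y1, Y4, Y3, Y3, Y3, Y5, Y4, Y0, Y4, Y4, Y4, Y2, Y3, Y5], [Y3, Y4, Y5, Y3, Y4, Y5, Y3, Y4, Y5, Y5, Y2, Y3, Y4, Y4, Y4, Y4, Y3, Y1, Y5, Y5, Y5, Y0,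 Y5, Y4, Y3, Y3, Y3], [Y5, Y3, Y4, Y5, Y3, Y4, Y5, Y3, Y4, Y3, Y5, Y2, Y4, Y4, Y4, Y1, Y4, Y3, Y5, Y5, Y5, Y4, Y0, Y5, Y3, Y3, Y3], [Y4, Y5, Y3, Y4, Y5, Y3, Y4, Y5, Y3, Y2, Y3, Y5, Y4, Y4, Y4, Y3, Y1, Y4, Y5, Y5, Y5, Y5, Y4, Y0, Y3, Y3, Y3], [Y3, Y3, Y3, Y4, Y4, Y4, Y5, Y5, Y5, Y4, Y4, Y4, Y5, Y2, Y3, Y5, Y5, Y5, Y4, Y3, Y1, Y3, Y3, Y3, Y0, Y5, Y4], [Y5, Y5, Y5, Y3, Y3, Y3, Y4, Y4, Y4, Y4, Y4, Y4, Y3, Y5, Y2, Y5, Y5, Y5, Y1, Y4, Y3, Y3, Y3, Y3, Y4, Y0, Y5], [Y4, Y4, Y4, Y5, Y5, Y5, Y3, Y3, Y3, Y4, Y4, Y4, Y2, Y3, Y5, Y5, Y5, Y5, Y3, Y1, Y4, Y3, Y3, Y3, Y5, Y4, Y0]]"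

fun expH3 :: "ty \<Rightarrow> H" where
  "expH3 Y0 = ((1, 0, 0, 0, 0, 0), (0, 0, 1, 0, 0, 0), (0, 1, 0, 0, 0, 0), (0, 0, 0, 8, 0, 0), (0, 0, 0, 0, 0, 8), (0, 0, 0, 0, 8, 0))"
| "expH3 Y1 = ((0, 1, 0, 0, 0, 0), (1, 0, 0, 0, 0, 0), (0, 0, 1, 0, 0, 0), (0, 0, 0, 0, 0, 8), (0, 0, 0, 0, 8, 0), (0, 0, 0, 8, 0, 0))"
| "expH3 Y2 = ((0, 0, 1, 0, 0, 0), (0, 1, 0, 0, 0, 0), (1, 0, 0, 0, 0, 0), (0, 0, 0, 0, 8, 0), (0, 0, 0, 8, 0, 0), (0, 0, 0, 0, 0, 8))"
| "expH3 Y3 = ((0, 0, 0, 1, 0, 0), (0, 0, 0, 0, 1, 0), (0, 0, 0, 0, 0, 1), (1, 0, 0, 1, 3, 3), (0, 1, 0, 3, 3, 1), (0, 0, 1, 3, 1, 3))"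
| "expH3 Y4 = ((0, 0, 0, 0, 1, 0), (0, 0, 0, 0, 0, 1), (0, 0, 0, 1, 0, 0), (0, 0, 1, 3, 1, 3), (1, 0, 0, 1, 3, 3), (0, 1, 0, 3, 3, 1))"
| "expH3 Y5 = ((0, 0, 0, 0, 0, 1), (0, 0, 0, 1, 0, 0), (0, 0, 0, 0, 1, 0), (0, 1, 0, 3, 3, 1), (0, 0, 1, 3, 1, 3), (1, 0, 0, 1, 3, 3))"

definition Pz3 :: "(int \<times> int) list list" where "Pz3 = [[(1, 0), (1, 0), (1, 0), (8, 0), (8, 0), (8, 0)], [(1, 0), (0, 1), (-1, -1), (-4, 0), (4, 4), (0, -4)], [(1, 0), (-1, -1), (0, 1), (-4, 0), (0, -4), (4, 4)], [(1, 0), (1, 0), (1, 0), (-1, 0), (-1, 0), (-1, 0)], [(1, 0), (0, 1), (-1, -1), (2, 0), (-2, -2), (0, 2)], [(1, 0), (-1, -1), (0, 1), (2, 0), (0, 2), (-2, -2)]]"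

definition K3 :: "nat list list" where "K3 = [[0], [0, 1, 9], [0, 1, 9], [0, 1, 2, 9, 10, 11, 12, 13], [0, 1, 2, 9, 10, 12], [0, 1, 2, 9, 10, 12]]"

definition Xt3 :: "ty list list list" where "Xt3 = [[[Y0], [Y5], [Y4], [Y5], [Y2], [Y3], [Y4], [Y3], [Y1], [Y3], [Y4], [Y5], [Y3], [Y4], [Y5], [Y3], [Y4], [Y5], [Y3], [Y4], [Y5], [Y3], [Y4], [Y5], [Y3], [Y4], [Y5]], [[Y0, Y4, Y3], [Y5, Y0, Y4], [Y4, Y5, Y5], [Y5, Y3, Y3], [Y2, Y5, Y4], [Y3, Y2, Y5], [Y4, Y1, Y3], [Y3, Y4, Y4], [Y1, Y3, Y5], [Y3, Y5, Y0], [Y4, Y3, Y5], [Y5, Y4, Y4], [Y3, Y3, Y3], [Y4, Y4, Y3], [Y5, Y5, Y3], [Y3, Y5, Y5], [Y4, Y3, Y2], [Y5, Y4, Y3], [Y3, Y3, Y4], [Y4, Y4, Y4], [Y5, Y5, Y4], [Y3, Y5, Y4], [Y4, Y3, Y3], [Y5, Y4, Y1], [Y3, Y3, Y5], [Y4, Y4, Y5], [Y5, Y5, Y5]], [[Y0, Y4, Y3], [Y5, Y0, Y4], [Y4, Y5, Y5], [Y5, Y3, Y3], [Y2, Y5, Y4], [Y3, Y2, Y5], [Y4, Y1, Y3], [Y3, Y4, Y4], [Y1, Y3, Y5], [Y3, Y5, Y0], [Y4, Y3, Y5], [Y5, Y4, Y4], [Y3, Y3, Y3], [Y4, Y4, Y3],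 [Y5, Y5, Y3], [Y3, Y5, Y5], [Y4, Y3, Y2], [Y5, Y4, Y3], [Y3, Y3, Y4], [Y4, Y4, Y4], [Y5, Y5, Y4], [Y3, Y5, Y4], [Y4, Y3, Y3], [Y5, Y4, Y1], [Y3, Y3, Y5], [Y4, Y4, Y5], [Y5, Y5, Y5]], [[Y0, Y4, Y5, Y3, Y5, Y4, Y3, Y5], [Y5, Y0, Y4, Y4, Y3, Y5, Y3, Y5], [Y4, Y5, Y0, Y5, Y4, Y3, Y3, Y5], [Y5, Y3, Y2, Y3, Y5, Y4, Y4, Y3], [Y2, Y5, Y3, Y4, Y3, Y5, Y4, Y3], [Y3, Y2, Y5, Y5, Y4, Y3, Y4, Y3], [Y4, Y1, Y3, Y3, Y5, Y4, Y5, Y4], [Y3, Y4, Y1, Y4, Y3, Y5, Y5, Y4], [Y1, Y3, Y4, Y5, Y4, Y3, Y5, Y4], [Y3, Y5, Y4, Y0, Y4, Y5, Y3, Y3], [Y4, Y3, Y5, Y5, Y0, Y4, Y3, Y3], [Y5, Y4, Y3, Y4, Y5, Y0, Y3, Y3], [Y3, Y3, Y3, Y3, Y3, Y3, Y0, Y4], [Y4, Y4, Y4, Y3, Y3, Y3, Y5, Y0], [Y5, Y5, Y5, Y3, Y3, Y3, Y4, Y5], [Y3, Y5, Y4, Y5, Y3, Y2, Y4, Y4], [Y4, Y3, Y5, Y2, Y5, Y3, Y4, Y4], [Y5, Y4, Y3, Y3, Y2, Y5, Y4, Y4], [Y3, Y3, Y3, Y4, Y4, Y4, Y5, Y3], [Y4,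 Y4, Y4, Y4, Y4, Y4, Y2, Y5], [Y5, Y5, Y5, Y4, Y4, Y4, Y3, Y2], [Y3, Y5, Y4, Y4, Y1, Y3, Y5, Y5], [Y4, Y3, Y5, Y3, Y4, Y1, Y5, Y5], [Y5, Y4, Y3, Y1, Y3, Y4, Y5, Y5], [Y3, Y3, Y3, Y5, Y5, Y5, Y4, Y1], [Y4, Y4, Y4, Y5, Y5, Y5, Y3, Y4], [Y5, Y5, Y5, Y5, Y5, Y5, Y1, Y3]], [[Y0, Y4, Y5, Y3, Y5, Y3], [Y5, Y0, Y4, Y4, Y3, Y3], [Y4, Y5, Y0, Y5, Y4, Y3], [Y5, Y3, Y2, Y3, Y5, Y4], [Y2, Y5, Y3, Y4, Y3, Y4], [Y3, Y2, Y5, Y5, Y4, Y4], [Y4, Y1, Y3, Y3, Y5, Y5], [Y3, Y4, Y1, Y4, Y3, Y5], [Y1, Y3, Y4, Y5, Y4, Y5], [Y3, Y5, Y4, Y0, Y4, Y3], [Y4, Y3, Y5, Y5, Y0, Y3], [Y5, Y4, Y3, Y4, Y5, Y3], [Y3, Y3, Y3, Y3, Y3, Y0], [Y4, Y4, Y4, Y3, Y3, Y5], [Y5, Y5, Y5, Y3, Y3, Y4], [Y3, Y5, Y4, Y5, Y3, Y4], [Y4, Y3, Y5, Y2, Y5, Y4], [Y5, Y4, Y3, Y3, Y2, Y4], [Y3, Y3, Y3, Y4, Y4, Y5], [Y4, Y4, Y4, Y4, Y4, Y2], [Y5, Y5, Y5, Y4, Y4, Y3], [Y3, Y5, Y4,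 Y4, Y1, Y5], [Y4, Y3, Y5, Y3, Y4, Y5], [Y5, Y4, Y3, Y1, Y3, Y5], [Y3, Y3, Y3, Y5, Y5, Y4], [Y4, Y4, Y4, Y5, Y5, Y3], [Y5, Y5, Y5, Y5, Y5, Y1]], [[Y0, Y4, Y5, Y3, Y5, Y3], [Y5, Y0, Y4, Y4, Y3, Y3], [Y4, Y5, Y0, Y5, Y4, Y3], [Y5, Y3, Y2, Y3, Y5, Y4], [Y2, Y5, Y3, Y4, Y3, Y4], [Y3, Y2, Y5, Y5, Y4, Y4], [Y4, Y1, Y3, Y3, Y5, Y5], [Y3, Y4, Y1, Y4, Y3, Y5], [Y1, Y3, Y4, Y5, Y4, Y5], [Y3, Y5, Y4, Y0, Y4, Y3], [Y4, Y3, Y5, Y5, Y0, Y3], [Y5, Y4, Y3, Y4, Y5, Y3], [Y3, Y3, Y3, Y3, Y3, Y0], [Y4, Y4, Y4, Y3, Y3, Y5], [Y5, Y5, Y5, Y3, Y3, Y4], [Y3, Y5, Y4, Y5, Y3, Y4], [Y4, Y3, Y5, Y2, Y5, Y4], [Y5, Y4, Y3, Y3, Y2, Y4], [Y3, Y3, Y3, Y4, Y4, Y5], [Y4, Y4, Y4, Y4, Y4, Y2], [Y5, Y5, Y5, Y4, Y4, Y3], [Y3, Y5, Y4, Y4, Y1, Y5], [Y4, Y3, Y5, Y3, Y4, Y5], [Y5, Y4, Y3, Y1, Y3, Y5], [Y3, Y3, Y3, Y5, Y5, Y4], [Y4, Y4, Y4, Y5, Y5, Y3], [Y5, Y5, Y5,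 Y5, Y5, Y1]]]"

definition Rc3 :: "(int \<times> int) list list list" where "Rc3 = [[[(1, 0)], [(1, 0)], [(1, 0)], [(1, 0)], [(1, 0)], [(1, 0)], [(1, 0)], [(1, 0)], [(1, 0)], [(1, 0)], [(1, 0)], [(1, 0)], [(1, 0)], [(1, 0)], [(1, 0)], [(1, 0)], [(1, 0)], [(1, 0)], [(1, 0)], [(1, 0)], [(1, 0)], [(1, 0)], [(1, 0)], [(1, 0)], [(1, 0)], [(1, 0)], [(1, 0)]], [[(1, 0), (0, 0), (0, 0)], [(0, 0), (1, 0), (0, 0)], [(1, 1), (0, -1), (0, 0)], [(0, -1), (-1, 0), (0, 0)], [(-1, -1), (0, 0), (0, 0)], [(0, 0), (-1, -1), (0, 0)], [(0, 0), (0, 1), (0, 0)], [(-1, 0), (1, 1), (0, 0)], [(0, 1), (0, 0), (0, 0)], [(0, 0), (0, 0), (1, 0)], [(1, 0), (-1, 0), (1, 0)], [(0, -1), (0, 1), (1, 0)], [(-1, 0), (0, 0), (-1, 0)], [(0, 1), (1, 0), (-1, 0)], [(0, 0), (0, -1), (-1, 0)], [(-1, 0), (1, 0), (-1, -1)], [(0, 0), (0, 0), (-1, -1)], [(-1, -1), (1, 1), (-1, -1)], [(0, 0), (-1, 0), (1, 1)], [(1, 1), (0, 0), (1, 1)], [(1, 0), (-1, -1), (1, 1)], [(0, 1), (0, -1), (0, 1)], [(1, 1), (-1, -1), (0, 1)], [(0, 0), (0, 0), (0, 1)], [(-1, -1), (0, 1), (0, -1)], [(0, 0), (1, 1), (0,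 -1)], [(0, -1), (0, 0), (0, -1)]], [[(1, 0), (0, 0), (0, 0)], [(0, 0), (1, 0), (0, 0)], [(0, -1), (1, 1), (0, 0)], [(1, 1), (-1, 0), (0, 0)], [(0, 1), (0, 0), (0, 0)], [(0, 0), (0, 1), (0, 0)], [(0, 0), (-1, -1), (0, 0)], [(-1, 0), (0, -1), (0, 0)], [(-1, -1), (0, 0), (0, 0)], [(0, 0), (0, 0), (1, 0)], [(1, 0), (-1, 0), (1, 0)], [(1, 1), (-1, -1), (1, 0)], [(-1, 0), (0, 0), (-1, 0)], [(-1, -1), (1, 0), (-1, 0)], [(0, 0), (1, 1), (-1, 0)], [(-1, 0), (1, 0), (0, 1)], [(0, 0), (0, 0), (0, 1)], [(0, 1), (0, -1), (0, 1)], [(0, 0), (-1, 0), (0, -1)], [(0, -1), (0, 0), (0, -1)], [(1, 0), (0, 1), (0, -1)], [(-1, -1), (1, 1), (-1, -1)], [(0, -1), (0, 1), (-1, -1)], [(0, 0), (0, 0), (-1, -1)], [(0, 1), (-1, -1), (1, 1)], [(0, 0), (0, -1), (1, 1)], [(1, 1), (0, 0), (1, 1)]], [[(1, 0), (0, 0), (0, 0), (0, 0), (0, 0), (0, 0), (0, 0), (0, 0)], [(0, 0), (1, 0), (0, 0), (0, 0), (0, 0), (0, 0), (0, 0), (0, 0)], [(0, 0), (0, 0), (1, 0), (0, 0), (0, 0), (0, 0), (0, 0), (0, 0)], [(0, 0), (0, 0), (1, 0), (0, 0), (0, 0), (0, 0), (0, 0), (0, 0)], [(1, 0), (0, 0),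 (0, 0), (0, 0), (0, 0), (0, 0), (0, 0), (0, 0)], [(0, 0), (1, 0), (0, 0), (0, 0), (0, 0), (0, 0), (0, 0), (0, 0)], [(0, 0), (1, 0), (0, 0), (0, 0), (0, 0), (0, 0), (0, 0), (0, 0)], [(0, 0), (0, 0), (1, 0), (0, 0), (0, 0), (0, 0), (0, 0), (0, 0)], [(1, 0), (0, 0), (0, 0), (0, 0), (0, 0), (0, 0), (0, 0), (0, 0)], [(0, 0), (0, 0), (0, 0), (1, 0), (0, 0), (0, 0), (0, 0), (0, 0)], [(0, 0), (0, 0), (0, 0), (0, 0), (1, 0), (0, 0), (0, 0), (0, 0)], [(0, 0), (0, 0), (0, 0), (0, 0), (0, 0), (1, 0), (0, 0), (0, 0)], [(0, 0), (0, 0), (0, 0), (0, 0), (0, 0), (0, 0), (1, 0), (0, 0)], [(0, 0), (0, 0), (0, 0), (0, 0), (0, 0), (0, 0), (0, 0), (1, 0)], [(-1, 0), (-1, 0), (-1, 0), (-1, 0), (-1, 0), (-1, 0), (-1, 0), (-1, 0)], [(0, 0), (0, 0), (0, 0), (0, 0), (0, 0), (1, 0), (0, 0), (0, 0)], [(0, 0), (0, 0), (0, 0), (1, 0), (0, 0), (0, 0), (0, 0), (0, 0)], [(0, 0), (0, 0), (0, 0), (0, 0), (1, 0), (0, 0), (0, 0), (0, 0)], [(-1, 0), (-1, 0), (-1, 0), (-1, 0), (-1, 0), (-1, 0), (-1, 0), (-1, 0)], [(0, 0), (0, 0), (0, 0), (0, 0), (0, 0), (0, 0), (1, 0), (0,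 0)], [(0, 0), (0, 0), (0, 0), (0, 0), (0, 0), (0, 0), (0, 0), (1, 0)], [(0, 0), (0, 0), (0, 0), (0, 0), (1, 0), (0, 0), (0, 0), (0, 0)], [(0, 0), (0, 0), (0, 0), (0, 0), (0, 0), (1, 0), (0, 0), (0, 0)], [(0, 0), (0, 0), (0, 0), (1, 0), (0, 0), (0, 0), (0, 0), (0, 0)], [(0, 0), (0, 0), (0, 0), (0, 0), (0, 0), (0, 0), (0, 0), (1, 0)], [(-1, 0), (-1, 0), (-1, 0), (-1, 0), (-1, 0), (-1, 0), (-1, 0), (-1, 0)], [(0, 0), (0, 0), (0, 0), (0, 0), (0, 0), (0, 0), (1, 0), (0, 0)]], [[(1, 0), (0, 0), (0, 0), (0, 0), (0, 0), (0, 0)], [(0, 0), (1, 0), (0, 0), (0, 0), (0, 0), (0, 0)], [(0, 0), (0, 0), (1, 0), (0, 0), (0, 0), (0, 0)], [(0, 0), (0, 0), (-1, -1), (0, 0), (0, 0), (0, 0)], [(-1, -1), (0, 0), (0, 0), (0, 0), (0, 0), (0, 0)], [(0, 0), (-1, -1), (0, 0), (0, 0), (0, 0), (0, 0)], [(0, 0), (0, 1), (0, 0), (0, 0), (0, 0), (0, 0)], [(0, 0), (0, 0), (0, 1), (0, 0), (0, 0), (0, 0)], [(0, 1), (0, 0), (0, 0), (0, 0), (0, 0), (0, 0)], [(0, 0), (0, 0), (0, 0), (1, 0), (0, 0), (0, 0)], [(0, 0), (0, 0), (0, 0), (0, 0), (1, 0), (0, 0)], [(0, 1), (-1, -1), (1,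 0), (0, -1), (1, 1), (0, 0)], [(0, 0), (0, 0), (0, 0), (0, 0), (0, 0), (1, 0)], [(0, 0), (-1, -1), (0, -1), (0, -1), (1, 0), (0, 1)], [(0, 1), (0, 0), (1, 1), (1, 0), (1, 1), (-1, -1)], [(1, 0), (0, 1), (-1, -1), (-1, 0), (0, -1), (0, 0)], [(0, 0), (0, 0), (0, 0), (-1, -1), (0, 0), (0, 0)], [(0, 0), (0, 0), (0, 0), (0, 0), (-1, -1), (0, 0)], [(1, 0), (0, 0), (0, -1), (-1, -1), (0, -1), (0, 1)], [(0, 0), (0, 0), (0, 0), (0, 0), (0, 0), (-1, -1)], [(0, 0), (0, 1), (-1, 0), (-1, 0), (-1, -1), (1, 0)], [(0, 0), (0, 0), (0, 0), (0, 0), (0, 1), (0, 0)], [(-1, -1), (1, 0), (0, 1), (1, 1), (-1, 0), (0, 0)], [(0, 0), (0, 0), (0, 0), (0, 1), (0, 0), (0, 0)], [(0, 0), (1, 0), (1, 1), (1, 1), (0, 1), (-1, -1)], [(-1, -1), (0, 0), (-1, 0), (0, 1), (-1, 0), (1, 0)], [(0, 0), (0, 0), (0, 0), (0, 0), (0, 0), (0, 1)]], [[(1, 0), (0, 0), (0, 0), (0, 0), (0, 0), (0, 0)], [(0, 0), (1, 0), (0, 0), (0, 0), (0, 0), (0, 0)], [(0, 0), (0, 0), (1, 0), (0, 0), (0, 0), (0, 0)], [(0, 0), (0, 0), (0, 1), (0, 0), (0, 0), (0, 0)], [(0, 1), (0, 0), (0, 0), (0, 0), (0, 0), (0, 0)],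 [(0, 0), (0, 1), (0, 0), (0, 0), (0, 0), (0, 0)], [(0, 0), (-1, -1), (0, 0), (0, 0), (0, 0), (0, 0)], [(0, 0), (0, 0), (-1, -1), (0, 0), (0, 0), (0, 0)], [(-1, -1), (0, 0), (0, 0), (0, 0), (0, 0), (0, 0)], [(0, 0), (0, 0), (0, 0), (1, 0), (0, 0), (0, 0)], [(0, 0), (0, 0), (0, 0), (0, 0), (1, 0), (0, 0)], [(-1, -1), (0, 1), (1, 0), (1, 1), (0, -1), (0, 0)], [(0, 0), (0, 0), (0, 0), (0, 0), (0, 0), (1, 0)], [(0, 0), (0, 1), (1, 1), (1, 1), (1, 0), (-1, -1)], [(-1, -1), (0, 0), (0, -1), (1, 0), (0, -1), (0, 1)], [(1, 0), (-1, -1), (0, 1), (-1, 0), (1, 1), (0, 0)], [(0, 0), (0, 0), (0, 0), (0, 1), (0, 0), (0, 0)], [(0, 0), (0, 0), (0, 0), (0, 0), (0, 1), (0, 0)], [(1, 0), (0, 0), (1, 1), (0, 1), (1, 1), (-1, -1)], [(0, 0), (0, 0), (0, 0), (0, 0), (0, 0), (0, 1)], [(0, 0), (-1, -1), (-1, 0), (-1, 0), (0, 1), (1, 0)], [(0, 0), (0, 0), (0, 0), (0, 0), (-1, -1), (0, 0)], [(0, 1), (1, 0), (-1, -1), (0, -1), (-1, 0), (0, 0)], [(0, 0), (0, 0), (0, 0), (-1, -1), (0, 0), (0, 0)], [(0, 0), (1, 0), (0, -1), (0, -1), (-1, -1), (0, 1)], [(0, 1), (0, 0), (-1, 0), (-1,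 -1), (-1, 0), (1, 0)], [(0, 0), (0, 0), (0, 0), (0, 0), (0, 0), (-1, -1)]]]"

definition et3 :: "((int \<times> int) \<times> (int \<times> int) \<times> (int \<times> int) \<times> (int \<times> int) \<times> (int \<times> int) \<times> (int \<times> int)) list" where "et3 = [((2, 0), (2, 0), (2, 0), (2, 0), (2, 0), (2, 0)), ((6, 0), (-6, -6), (0, 6), (-3, 0), (0, -3), (3, 3)), ((6, 0), (0, 6), (-6, -6), (-3, 0), (3, 3), (0, -3)), ((16, 0), (16, 0), (16, 0), (-2, 0), (-2, 0), (-2, 0)), ((12, 0), (-12, -12), (0, 12), (3, 0), (0, 3), (-3, -3)), ((12, 0), (0, 12), (-12, -12), (3, 0), (-3, -3), (0, 3))]"

definition Pst3 :: "complex list list" where "Pst3 = [[1, 1, 1, 8, 8, 8],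
            [1, omega, cnj omega, -4, -4 * cnj omega, -4 * omega],
            [1, cnj omega, omega, -4, -4 * omega, -4 * cnj omega],
            [1, 1, 1, -1, -1, -1],
            [1, omega, cnj omega, 2, 2 * cnj omega, 2 * omega],
            [1, cnj omega, omega, 2, 2 * omega, 2 * cnj omega]]"
definition mm3 :: "nat list" where "mm3 = [1, 3, 3, 8, 6, 6]"

lemma c_phi3: "phi_list 3 = phiL3" by code_simp
lemma c_len3: "length phiL3 = 27 \<and> length T3 = 27 \<and> list_all (\<lambda>r. length r = 27) T3 \<and> length TT3 = 27 \<and> list_all (\<lambda>r. length r = 27) TT3"
  by code_simp
lemma c_tt3: "TT3 = List.transpose T3" by code_simp
lemma c_rel3: "list_all2 (\<lambda>x row. list_all2 (\<lambda>y t. relchk x y t) phiL3 row) phiL3 T3" by code_simp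
lemma c_diag3: "map (map (\<lambda>t. t = Y0)) T3 = map (\<lambda>a. map (\<lambda>b. a = b) [0..<27]) [0..<27]" by code_simp
lemma c_hist3: "list_all (\<lambda>row. list_all2 (\<lambda>col t. hist (zip row col) = expH3 t) TT3 row) T3" by code_simp
lemma c_sym3: "\<forall>ti\<in>set allty. \<forall>tj\<in>set allty. \<forall>tk\<in>set allty. sel6 (sel6 (expH3 tk) ti) tj = sel6 (sel6 (expH3 tk) tj) ti"
  by code_simp
lemma c_wit3: "set (T3!0) = set allty" by code_simp
lemma c_A43: "\<forall>i\<in>set [0..<6]. \<forall>b\<in>set [0..<6]. \<forall>tk\<in>set allty.
   zsum (map (\<lambda>ta. zmul (sel6 (et3!i) ta) (int (sel6 (sel6 (expH3 tk) ta) (tyof b)), 0)) allty) = zmul (Pz3!i!b) (sel6 (et3!i) tk)"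
  by code_simp
lemma c_A53: "\<forall>i\<in>set [0..<6]. \<forall>j\<in>set [0..<6]. zsum (map (\<lambda>b. zmul (Pz3!i!b) (sel6 (et3!j) (tyof b))) [0..<6]) = (if i = j then (54,0) else (0,0))"
  by code_simp
lemma c_A63: "\<forall>j\<in>set [0..<6]. \<forall>tk\<in>set allty. zsum (map (\<lambda>i. zmul (Pz3!i!j) (sel6 (et3!i) tk)) [0..<6]) = (if tyof j = tk then (54,0) else (0,0))"
  by code_simp
lemma c_A73: "\<forall>t\<in>set allty. sel6 (et3!0) t = (2,0)" by code_simp
lemma c_A83: "\<forall>i\<in>set [0..<6]. sel6 (et3!i) Y0 \<noteq> (0,0)" by code_simp
lemma c_P03: "\<forall>i\<in>set [0..<6]. Pz3!i!0 = (1,0)" by code_simp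
lemma c_Pz3: "length Pz3 = 6 \<and> list_all (\<lambda>r. length r = 6) Pz3 \<and> length K3 = 6" by code_simp
lemma c_K3: "\<forall>i\<in>set [0..<6]. length (K3!i) = mm3!i \<and> list_all (\<lambda>k. k < 27) (K3!i)
   \<and> length (Xt3!i) = 27 \<and> list_all (\<lambda>r. length r = mm3!i) (Xt3!i)
   \<and> length (Rc3!i) = 27 \<and> list_all (\<lambda>c. length c = mm3!i) (Rc3!i)"
  unfolding mm3_def by code_simp
lemma c_Xt3: "Xt3 = map (\<lambda>Ki. map (\<lambda>r. map (nth r) Ki) T3) K3" by code_simp
lemma c_rk3: "\<forall>i\<in>set [0..<6]. rkchk (et3!i) T3 (Xt3!i) (Rc3!i)" by code_simp
lemma c_P3: "Pst3 = map (map emb) Pz3"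
  by (simp add: Pst3_def Pz3_def cnj_omega algebra_simps)
lemma c_msum3: "(\<Sum>i<6. mm3!i) = 27" by (simp add: sum6 mm3_def)

definition tt3 :: "nat \<Rightarrow> nat \<Rightarrow> nat" where "tt3 a b = tyn (T3!a!b)"
definition pc3 :: "nat \<Rightarrow> nat \<Rightarrow> nat \<Rightarrow> nat" where
  "pc3 i j k = sel6 (sel6 (expH3 (tyof k)) (tyof i)) (tyof j)"
definition e3 :: "nat \<Rightarrow> nat \<Rightarrow> complex" where "e3 i k = emb (sel6 (et3!i) (tyof k)) / 54"
definition R3 :: "nat \<Rightarrow> nat \<Rightarrow> nat \<Rightarrow> complex" where "R3 i k b = emb (Rc3!i!b!k)"
definition KK3 :: "nat \<Rightarrow> nat list" where "KK3 i = K3!i"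

lemma row3: "a < 27 \<Longrightarrow> length (T3!a) = 27" using c_len3 by (simp add: list_all_length)
lemma TT3: "b < 27 \<Longrightarrow> z < 27 \<Longrightarrow> TT3!b!z = T3!z!b"
proof -
  assume b: "b < 27" and z: "z < 27"
  have "length (List.transpose T3) = 27" using c_tt3 c_len3 by simp
  then have "List.transpose T3 ! b = map (\<lambda>xs. xs ! b) (filter (\<lambda>ys. b < length ys) T3)"
    using b by (simp add: nth_transpose)
  also have "filter (\<lambda>ys. b < length ys) T3 = T3"
    using c_len3 b by (auto simp: filter_id_conv list_all_iff)
  finally show ?thesis using c_tt3 c_len3 z by simp
qed

interpretation I3: cdata 3 27 tt3 pc3 Pst3 mm3 e3 KK3 R3
proof
  show "NPhi 3 = 27" using c_phi3 c_len3 by simp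
  show "\<And>a b. a < 27 \<Longrightarrow> b < 27 \<Longrightarrow> tt3 a b < 6" by (simp add: tt3_def)
  show "\<And>a b l. a < 27 \<Longrightarrow> b < 27 \<Longrightarrow> l < 6 \<Longrightarrow> rel l (phi_list 3 ! a) (phi_list 3 ! b) = (tt3 a b = l)"
  proof -
    fix a b l :: nat assume a: "a < 27" and b: "b < 27" and l: "l < 6"
    have "list_all2 (\<lambda>y t. relchk (phiL3!a) y t) phiL3 (T3!a)"
      using list_all2_nthD[OF c_rel3] a c_len3 by simp
    then have rc: "relchk (phiL3!a) (phiL3!b) (T3!a!b)"
      using list_all2_nthD b c_len3 by fastforce
    have "rel (tyn (tyof l)) (phiL3!a) (phiL3!b) = (T3!a!b = tyof l)"
      using rc by (cases "tyof l") (auto simp: relchk_def)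
    then show "rel l (phi_list 3 ! a) (phi_list 3 ! b) = (tt3 a b = l)"
      using l tyn_tyof[OF l] by (auto simp: c_phi3 tt3_def)
  qed
  show "\<And>a b. a < 27 \<Longrightarrow> b < 27 \<Longrightarrow> (tt3 a b = 0) = (a = b)"
  proof -
    fix a b :: nat assume a: "a < 27" and b: "b < 27"
    have "map (map (\<lambda>t. t = Y0)) T3 ! a ! b = (T3!a!b = Y0)" using a b c_len3 row3 by simp
    also have "\<dots> = (tt3 a b = 0)" by (cases "T3!a!b") (auto simp: tt3_def)
    finally show "(tt3 a b = 0) = (a = b)" using c_diag3 a b by simp
  qed
  show "\<And>a b i j. a < 27 \<Longrightarrow> b < 27 \<Longrightarrow> i < 6 \<Longrightarrow> j < 6 \<Longrightarrow>
      card {z. z < 27 \<and> tt3 a z = i \<and> tt3 z b = j} = pc3 i j (tt3 a b)"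
  proof -
    fix a b i j :: nat assume a: "a < 27" and b: "b < 27" and i: "i < 6" and j: "j < 6"
    have "list_all2 (\<lambda>col t. hist (zip (T3!a) col) = expH3 t) TT3 (T3!a)"
      using c_hist3 a c_len3 by (simp add: list_all_length)
    then have h: "hist (zip (T3!a) (TT3!b)) = expH3 (T3!a!b)"
      using list_all2_nthD b c_len3 by fastforce
    have "pc3 i j (tt3 a b) = length (filter (\<lambda>p. p = (tyof i, tyof j)) (zip (T3!a) (TT3!b)))"
      unfolding pc3_def tt3_def tyof_tyn h[symmetric] by (rule hist_count)
    also have "\<dots> = card {z. z < 27 \<and> (T3!a!z, TT3!b!z) = (tyof i, tyof j)}"
      using row3[OF a] c_len3 b by (simp add: length_filter_conv_card list_all_length) (rule arg_cong[where f=card], auto simp: nth_zip row3)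
    also have "{z. z < 27 \<and> (T3!a!z, TT3!b!z) = (tyof i, tyof j)} = {z. z < 27 \<and> tt3 a z = i \<and> tt3 z b = j}"
    proof -
      have "\<And>t k. k < 6 \<Longrightarrow> (t = tyof k) = (tyn t = k)" by (metis tyn_tyof tyof_tyn)
      then show ?thesis using i j TT3[OF b] by (auto simp: tt3_def)
    qed
    finally show "card {z. z < 27 \<and> tt3 a z = i \<and> tt3 z b = j} = pc3 i j (tt3 a b)" by simp
  qed
  show "\<And>i j k. i < 6 \<Longrightarrow> j < 6 \<Longrightarrow> k < 6 \<Longrightarrow> pc3 i j k = pc3 j i k"
    using c_sym3 by (simp add: pc3_def)
  show "\<And>k. k < 6 \<Longrightarrow> \<exists>b<27. tt3 0 b = k"
  proof -
    fix k :: nat assume k: "k < 6"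
    have "tyof k \<in> set (T3!0)" using c_wit3 by simp
    then obtain b where "b < length (T3!0)" "T3!0!b = tyof k" by (metis in_set_conv_nth)
    then show "\<exists>b<27. tt3 0 b = k" using row3[of 0] tyn_tyof[OF k] by (auto simp: tt3_def)
  qed
  show "0 < (27::nat)" by simp
  have Pnth: "\<And>i b. i < 6 \<Longrightarrow> b < 6 \<Longrightarrow> Pst3!i!b = emb (Pz3!i!b)"
    using c_Pz3 by (simp add: c_P3 list_all_length)
  show "\<And>i b k. i < 6 \<Longrightarrow> b < 6 \<Longrightarrow> k < 6 \<Longrightarrow> (\<Sum>a<6. e3 i a * of_nat (pc3 a b k)) = Pst3!i!b * e3 i k"
  proof -
    fix i b k :: nat assume i: "i < 6" and b: "b < 6" and k: "k < 6"
    let ?G = "\<lambda>ta. zmul (sel6 (et3!i) ta) (int (sel6 (sel6 (expH3 (tyof k)) ta) (tyof b)), 0)"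
    have "(\<Sum>a<6. e3 i a * of_nat (pc3 a b k)) = (\<Sum>a<6. emb (?G (tyof a)) / 54)"
      by (intro sum.cong refl) (simp add: e3_def pc3_def emb_zmul)
    also have "\<dots> = sum_list (map (\<lambda>ta. emb (?G ta) / 54) allty)"
      by (rule sum_tyof)
    also have "\<dots> = emb (zsum (map ?G allty)) / 54"
      by (simp add: emb_zsum sum_list_div o_def)
    also have "\<dots> = emb (zmul (Pz3!i!b) (sel6 (et3!i) (tyof k))) / 54"
      using c_A43 i b by simp
    also have "\<dots> = Pst3!i!b * e3 i k" using Pnth[OF i b] by (simp add: emb_zmul e3_def)
    finally show "(\<Sum>a<6. e3 i a * of_nat (pc3 a b k)) = Pst3!i!b * e3 i k" .
  qed
  show "\<And>i j. i < 6 \<Longrightarrow> j < 6 \<Longrightarrow> (\<Sum>b<6. Pst3!i!b * e3 j b) = (if i=j then 1 else 0)"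
  proof -
    fix i j :: nat assume i: "i < 6" and j: "j < 6"
    let ?G = "\<lambda>b. zmul (Pz3!i!b) (sel6 (et3!j) (tyof b))"
    have "(\<Sum>b<6. Pst3!i!b * e3 j b) = (\<Sum>b<6. emb (?G b) / 54)"
      by (intro sum.cong refl) (simp add: Pnth i e3_def emb_zmul)
    also have "\<dots> = (\<Sum>b<6. emb (?G b)) / 54" by (simp add: sum_divide_distrib)
    also have "\<dots> = emb (zsum (map ?G [0..<6])) / 54"
      by (simp add: emb_zsum sum_set_upt_conv_sum_list_nat[symmetric] lessThan_atLeast0 atLeastLessThan_upt[symmetric] o_def)
    also have "\<dots> = (if i=j then 1 else 0)" using c_A53 i j by simp
    finally show "(\<Sum>b<6. Pst3!i!b * e3 j b) = (if i=j then 1 else 0)" .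
  qed
  show "\<And>j k. j < 6 \<Longrightarrow> k < 6 \<Longrightarrow> (\<Sum>i<6. Pst3!i!j * e3 i k) = (if j=k then 1 else 0)"
  proof -
    fix j k :: nat assume j: "j < 6" and k: "k < 6"
    let ?G = "\<lambda>i. zmul (Pz3!i!j) (sel6 (et3!i) (tyof k))"
    have "(\<Sum>i<6. Pst3!i!j * e3 i k) = (\<Sum>i<6. emb (?G i) / 54)"
      by (intro sum.cong refl) (simp add: Pnth j e3_def emb_zmul)
    also have "\<dots> = (\<Sum>b<6. emb (?G b)) / 54" by (simp add: sum_divide_distrib)
    also have "\<dots> = emb (zsum (map ?G [0..<6])) / 54"
      by (simp add: emb_zsum sum_set_upt_conv_sum_list_nat[symmetric] lessThan_atLeast0 atLeastLessThan_upt[symmetric] o_def)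
    also have "\<dots> = (if tyof j = tyof k then 1 else 0)" using c_A63 j by simp
    also have "\<dots> = (if j=k then 1 else 0)" using j k by (metis tyn_tyof)
    finally show "(\<Sum>i<6. Pst3!i!j * e3 i k) = (if j=k then 1 else 0)" .
  qed
  show "\<And>k. k < 6 \<Longrightarrow> e3 0 k = 1 / of_nat 27" using c_A73 by (simp add: e3_def)
  show "\<And>i. i < 6 \<Longrightarrow> e3 i 0 \<noteq> 0"
  proof
    fix i :: nat assume i: "i < 6" and h: "e3 i 0 = 0"
    then have "emb (sel6 (et3!i) Y0) = emb (0,0)" by (simp add: e3_def)
    then show False using emb_inj c_A83 i by fastforce
  qed
  show "\<And>i. i < 6 \<Longrightarrow> Pst3!i!0 = 1" using c_P03 Pnth by simp
  show "\<And>i k. i < 6 \<Longrightarrow> k < mm3!i \<Longrightarrow> KK3 i ! k < 27"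
    using c_K3 by (auto simp: KK3_def list_all_length)
  show "\<And>i a b. i < 6 \<Longrightarrow> a < 27 \<Longrightarrow> b < 27 \<Longrightarrow>
     (\<Sum>k<mm3!i. e3 i (tt3 a (KK3 i!k)) * R3 i k b) = e3 i (tt3 a b)"
  proof -
    fix i a b :: nat assume i: "i < 6" and a: "a < 27" and b: "b < 27"
    have K: "length (K3!i) = mm3!i" "length (Xt3!i) = 27" "list_all (\<lambda>r. length r = mm3!i) (Xt3!i)"
       "length (Rc3!i) = 27" "list_all (\<lambda>c. length c = mm3!i) (Rc3!i)"
      using c_K3 i by auto
    have XL: "length (Xt3!i!a) = mm3!i" using K a by (simp add: list_all_length)
    have RL: "length (Rc3!i!b) = mm3!i" using K b by (simp add: list_all_length)
    have lK: "i < length K3" using c_Pz3 i by simp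
    have xt: "Xt3!i!a!k = T3!a!(K3!i!k)" if k: "k < mm3!i" for k
    proof -
      have "Xt3!i = map (\<lambda>r. map (nth r) (K3!i)) T3" by (subst c_Xt3) (simp add: lK)
      moreover have "a < length T3" using a c_len3 by simp
      ultimately have "Xt3!i!a = map (nth (T3!a)) (K3!i)" by simp
      then show ?thesis using k K(1) by simp
    qed
    have "list_all2 (\<lambda>rc t. zsum (map2 (\<lambda>tk r. zmul (sel6 (et3!i) tk) r) (Xt3!i!a) rc) = sel6 (et3!i) t) (Rc3!i) (T3!a)"
    proof -
      have "rkchk (et3!i) T3 (Xt3!i) (Rc3!i)" using c_rk3 i by simp
      then show ?thesis unfolding rkchk_def using a K(2) by (auto dest: list_all2_nthD)
    qed
    then have ck: "zsum (map2 (\<lambda>tk r. zmul (sel6 (et3!i) tk) r) (Xt3!i!a) (Rc3!i!b)) = sel6 (et3!i) (T3!a!b)"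
      using list_all2_nthD b K(4) by fastforce
    have "(\<Sum>k<mm3!i. e3 i (tt3 a (KK3 i!k)) * R3 i k b)
        = (\<Sum>k<mm3!i. emb (zmul (sel6 (et3!i) (Xt3!i!a!k)) (Rc3!i!b!k)) / 54)"
      by (intro sum.cong refl) (simp add: xt e3_def tt3_def KK3_def R3_def emb_zmul)
    also have "\<dots> = sum_list (map2 (\<lambda>tk r. emb (zmul (sel6 (et3!i) tk) r) / 54) (Xt3!i!a) (Rc3!i!b))"
      using XL RL by (simp add: sum_list_sum_nth atLeast0LessThan)
    also have "\<dots> = emb (zsum (map2 (\<lambda>tk r. zmul (sel6 (et3!i) tk) r) (Xt3!i!a) (Rc3!i!b))) / 54"
      by (simp only: emb_zsum map_map o_def case_prod_unfold sum_list_div)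
    also have "\<dots> = e3 i (tt3 a b)" using ck by (simp add: e3_def tt3_def)
    finally show "(\<Sum>k<mm3!i. e3 i (tt3 a (KK3 i!k)) * R3 i k b) = e3 i (tt3 a b)" .
  qed
  show "(\<Sum>i<6. mm3!i) = 27" by (rule c_msum3)
qed

lemma main3: "char_table 3 Pst3 mm3" by (rule I3.main)


theorem mainTheorem16:
  shows "char_table 2
           [[1, 1, 1, 2, 2, 2],
            [1, omega, cnj omega, 2, 2 * cnj omega, 2 * omega],
            [1, cnj omega, omega, 2, 2 * omega, 2 * cnj omega],
            [1, 1, 1, -1, -1, -1],
            [1, omega, cnj omega, -1, - cnj omega, - omega],
            [1, cnj omega, omega, -1, - omega, - cnj omega]]
           [1, 1, 1, 2, 2, 2]
       \<and> char_table 3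
           [[1, 1, 1, 8, 8, 8],
            [1, omega, cnj omega, -4, -4 * cnj omega, -4 * omega],
            [1, cnj omega, omega, -4, -4 * omega, -4 * cnj omega],
            [1, 1, 1, -1, -1, -1],
            [1, omega, cnj omega, 2, 2 * cnj omega, 2 * omega],
            [1, cnj omega, omega, 2, 2 * omega, 2 * cnj omega]]
           [1, 3, 3, 8, 6, 6]"
    using main2 main3 unfolding Pst2_def mm2_def Pst3_def mm3_def by (rule conjI)

end
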